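(* Let $\Lambda$ be a cohomology algebra of $b^+=1$ type. Then the subgroup $I_T\subseteq\Lambda^2$ generated by all products $xy$ with $x,y\in\Lambda^1$ has rank at most $1$, and $\tilde b_1(\Lambda)$ is even.
   Context: A cohomology algebra is a graded, commutative, associative algebra $\Lambda=\bigoplus_{i=0}^4\Lambda^i$ over $\Lambda^0=\mathbb{Z}$, each $\Lambda^i$ free abelian of finite rank $b_i(\Lambda)$, with an isomorphism $p:\Lambda^4\cong\mathbb{Z}$ such that each product pairing $\Lambda^i\times\Lambda^{4-i}\to\mathbb{Z}$ is perfect. $\Gamma(x,y)=p(xy)$ on $\Lambda^2$ is a unimodular symmetric form; $b^+=1$ type means $\Gamma$ has exactly one positive eigenvalue. $\ker T=\{x\in\Lambda^1: xy=0\ \forall y\in\Lambda^1\}$ and $\tilde b_1(\Lambda)=b_1(\Lambda)-\mathrm{rank}\ker T$ (the rank of the skew-symmetric product pairing $T:\Lambda^1\times\Lambda^1\to\Lambda^2$). *)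

theory Defs
  imports "Jordan_Normal_Form.Char_Poly"
begin

text \<open>The degree-i part Lambda^i, a free abelian group of
 rank b i, is represented as Z^(b i): integer vectors nat => int vanishing from index b i on.
 The product of a degree-i and a degree-j element is given by m i j.\<close>

definition deg_part :: "(nat \<Rightarrow> nat) \<Rightarrow> nat \<Rightarrow> (nat \<Rightarrow> int) set" where
  "deg_part b i = {v. \<forall>k\<ge>b i. v k = 0}"

definition vadd :: "(nat \<Rightarrow> int) \<Rightarrow> (nat \<Rightarrow> int) \<Rightarrow> (nat \<Rightarrow> int)" where
  "vadd x y = (\<lambda>k. x k + y k)"

definition vsmult :: "int \<Rightarrow> (nat \<Rightarrow> int) \<Rightarrow> (nat \<Rightarrow> int)" where
  "vsmult c x = (\<lambda>k. c * x k)"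

definition vzero :: "nat \<Rightarrow> int" where
  "vzero = (\<lambda>k. 0)"

definition unit_vec :: "nat \<Rightarrow> int" where
  "unit_vec = (\<lambda>k. if k = 0 then 1 else 0)"

definition additive_on :: "(nat \<Rightarrow> int) set \<Rightarrow> ((nat \<Rightarrow> int) \<Rightarrow> int) \<Rightarrow> bool" where
  "additive_on A f = (\<forall>x\<in>A. \<forall>y\<in>A. f (vadd x y) = f x + f y)"

definition cohomology_algebra ::
  "(nat \<Rightarrow> nat) \<Rightarrow> (nat \<Rightarrow> nat \<Rightarrow> (nat \<Rightarrow> int) \<Rightarrow> (nat \<Rightarrow> int) \<Rightarrow> (nat \<Rightarrow> int))
    \<Rightarrow> ((nat \<Rightarrow> int) \<Rightarrow> int) \<Rightarrow> bool" where
  "cohomology_algebra b m p \<longleftrightarrow>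
     b 0 = 1
   \<comment> \<open>products land in the right degree\<close>
   \<and> (\<forall>i j x y. i + j \<le> 4 \<longrightarrow> x \<in> deg_part b i \<longrightarrow> y \<in> deg_part b j \<longrightarrow>
        m i j x y \<in> deg_part b (i + j))
   \<comment> \<open>bilinearity\<close>
   \<and> (\<forall>i j x x' y. i + j \<le> 4 \<longrightarrow> x \<in> deg_part b i \<longrightarrow> x' \<in> deg_part b i \<longrightarrow> y \<in> deg_part b j \<longrightarrow>
        m i j (vadd x x') y = vadd (m i j x y) (m i j x' y))
   \<and> (\<forall>i j x y y'. i + j \<le> 4 \<longrightarrow> x \<in> deg_part b i \<longrightarrow> y \<in> deg_part b j \<longrightarrow> y' \<in> deg_part b j \<longrightarrow>
        m i j x (vadd y y') = vadd (m i j x y) (m i j x y'))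
   \<comment> \<open>associativity\<close>
   \<and> (\<forall>i j k x y z. i + j + k \<le> 4 \<longrightarrow> x \<in> deg_part b i \<longrightarrow> y \<in> deg_part b j \<longrightarrow> z \<in> deg_part b k \<longrightarrow>
        m (i + j) k (m i j x y) z = m i (j + k) x (m j k y z))
   \<comment> \<open>graded commutativity\<close>
   \<and> (\<forall>i j x y. i + j \<le> 4 \<longrightarrow> x \<in> deg_part b i \<longrightarrow> y \<in> deg_part b j \<longrightarrow>
        m i j x y = vsmult ((-1) ^ (i * j)) (m j i y x))
   \<comment> \<open>unit of Lambda^0 = Z\<close>
   \<and> (\<forall>j x. j \<le> 4 \<longrightarrow> x \<in> deg_part b j \<longrightarrow> m 0 j unit_vec x = x)
   \<comment> \<open>p : Lambda^4 = Z an isomorphism\<close>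
   \<and> additive_on (deg_part b 4) p
   \<and> bij_betw p (deg_part b 4) UNIV
   \<comment> \<open>perfect pairings Lambda^i x Lambda^(4-i) -> Z\<close>
   \<and> (\<forall>i\<le>4. \<forall>f. additive_on (deg_part b (4 - i)) f \<longrightarrow>
        (\<exists>!x. x \<in> deg_part b i \<and> (\<forall>y\<in>deg_part b (4 - i). p (m i (4 - i) x y) = f y)))"

definition Gamma_form where
  "Gamma_form m p x y = p (m 2 2 x y)"

definition std_basis :: "nat \<Rightarrow> nat \<Rightarrow> int" where
  "std_basis k = (\<lambda>l. if l = k then 1 else 0)"

definition Gamma_matrix :: "(nat \<Rightarrow> nat) \<Rightarrow> (nat \<Rightarrow> nat \<Rightarrow> (nat \<Rightarrow> int) \<Rightarrow> (nat \<Rightarrow> int) \<Rightarrow> (nat \<Rightarrow> int))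
    \<Rightarrow> ((nat \<Rightarrow> int) \<Rightarrow> int) \<Rightarrow> real mat" where
  "Gamma_matrix b m p = mat (b 2) (b 2)
     (\<lambda>(k, l). real_of_int (Gamma_form m p (std_basis k) (std_basis l)))"

definition num_pos_eigenvalues :: "real mat \<Rightarrow> nat" where
  "num_pos_eigenvalues A = (\<Sum>r\<in>{r. r > 0 \<and> eigenvalue A r}. order r (char_poly A))"

definition bplus_one_type where
  "bplus_one_type b m p \<longleftrightarrow> cohomology_algebra b m p \<and> num_pos_eigenvalues (Gamma_matrix b m p) = 1"

definition int_span :: "(nat \<Rightarrow> int) set \<Rightarrow> (nat \<Rightarrow> int) set" where
  "int_span S = {(\<lambda>k. \<Sum>s\<in>F. c s * s k) | F c. finite F \<and> F \<subseteq> S}"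

definition int_lin_indep :: "(nat \<Rightarrow> int) set \<Rightarrow> bool" where
  "int_lin_indep S \<longleftrightarrow> finite S \<and>
     (\<forall>c. (\<forall>k. (\<Sum>s\<in>S. c s * s k) = 0) \<longrightarrow> (\<forall>s\<in>S. c s = 0))"

definition zrank :: "(nat \<Rightarrow> int) set \<Rightarrow> nat" where
  "zrank H = (GREATEST n. \<exists>S. S \<subseteq> H \<and> int_lin_indep S \<and> card S = n)"

definition I_T where
  "I_T b m = int_span {m 1 1 x y | x y. x \<in> deg_part b 1 \<and> y \<in> deg_part b 1}"

definition ker_T where
  "ker_T b m = {x \<in> deg_part b 1. \<forall>y\<in>deg_part b 1. m 1 1 x y = vzero}"

definition b1_tilde where
  "b1_tilde b m = b 1 - zrank (ker_T b m)"

end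

theory Submission
  imports Defs "Jordan_Normal_Form.Schur_Decomposition" "HOL-Computational_Algebra.Fundamental_Theorem_Algebra" "HOL-Library.Function_Algebras"
begin


lemma mult_mat_vec_index_sum:
  assumes "A \<in> carrier_mat n n" "v \<in> carrier_vec n" "i < n"
  shows "(A *\<^sub>v v) $ i = (\<Sum>j\<in>{0..<n}. A $$ (i,j) * v $ j)"
  using assms by (auto simp: scalar_prod_def)

lemma sym_real_eigenvalue:
  fixes A :: "real mat"
  assumes A: "A \<in> carrier_mat n n" and sym: "A\<^sup>T = A" and n: "n > 0"
  shows "\<exists>l. eigenvalue A l"
proof -
  let ?Ac = "map_mat complex_of_real A"
  have Ac: "?Ac \<in> carrier_mat n n" using A by auto
  have cp: "char_poly ?Ac = map_poly of_real (char_poly A)"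
    using of_real_hom.char_poly_hom[OF A] by simp
  have "degree (char_poly ?Ac) = n" using degree_monic_char_poly[OF Ac] by simp
  hence "\<not> constant (poly (char_poly ?Ac))" using n constant_degree[of "char_poly ?Ac"] by simp
  then obtain z where z: "poly (char_poly ?Ac) z = 0" using fundamental_theorem_of_algebra by blast
  hence "eigenvalue ?Ac z" using eigenvalue_root_char_poly[OF Ac] by simp
  then obtain v where ev: "eigenvector ?Ac v z" unfolding eigenvalue_def by blast
  hence v: "v \<in> carrier_vec n" and v0: "v \<noteq> 0\<^sub>v n" and Av: "?Ac *\<^sub>v v = z \<cdot>\<^sub>v v"
    using Ac unfolding eigenvector_def by auto
  define s where "s = (\<Sum>i\<in>{0..<n}. cnj (v$i) * (?Ac *\<^sub>v v)$i)"
  define N where "N = (\<Sum>i\<in>{0..<n}. cnj (v$i) * v$i)"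
  have s1: "s = z * N" unfolding s_def N_def Av using v
    by (auto simp: sum_distrib_left intro!: sum.cong)
  have s2: "s = (\<Sum>i\<in>{0..<n}. \<Sum>j\<in>{0..<n}. cnj (v$i) * of_real (A$$(i,j)) * v$j)"
  proof -
    have Avi: "(?Ac *\<^sub>v v)$i = (\<Sum>j\<in>{0..<n}. of_real (A$$(i,j)) * v$j)" if "i<n" for i
      using A v that by (auto simp: scalar_prod_def)
    show ?thesis unfolding s_def
      by (intro sum.cong refl, simp add: Avi sum_distrib_left mult.assoc)
  qed
  have Asym: "A$$(i,j) = A$$(j,i)" if "i<n" "j<n" for i j
    using arg_cong[OF sym, of "\<lambda>B. B$$(j,i)"] that A by auto
  have "cnj s = (\<Sum>i\<in>{0..<n}. \<Sum>j\<in>{0..<n}. v$i * of_real (A$$(i,j)) * cnj (v$j))"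
    unfolding s2 by (simp add: cnj_sum)
  also have "\<dots> = (\<Sum>j\<in>{0..<n}. \<Sum>i\<in>{0..<n}. v$i * of_real (A$$(i,j)) * cnj (v$j))"
    by (rule sum.swap)
  also have "\<dots> = s" unfolding s2
    by (intro sum.cong refl, simp add: Asym mult.commute mult.left_commute)
  finally have cs: "cnj s = s" .
  have N: "N = of_real (\<Sum>i\<in>{0..<n}. (cmod (v$i))^2)"
    unfolding N_def of_real_sum by (intro sum.cong refl) (simp add: complex_norm_square[symmetric] mult.commute)
  obtain i where i: "i < n" "v$i \<noteq> 0" using v v0 by (metis carrier_vecD eq_vecI index_zero_vec(1) index_zero_vec(2))
  have "(\<Sum>i\<in>{0..<n}. (cmod (v$i))^2) > 0"
    by (rule sum_pos2[of _ i], insert i, auto)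
  hence Npos: "N \<noteq> 0" "Im N = 0" unfolding N
    by (metis of_real_eq_0_iff less_irrefl) (rule Im_complex_of_real)
  have "z = s / N" using s1 Npos by auto
  moreover have "Im s = 0" using arg_cong[OF cs, of Im] by simp
  ultimately have "Im z = 0" using Npos by (simp add: Im_divide)
  then have zr: "z = of_real (Re z)" by (simp add: complex_eq_iff)
  have "of_real (poly (char_poly A) (Re z)) = (0::complex)"
    using z unfolding cp by (subst zr[symmetric] of_real_hom.poly_map_poly[symmetric], simp add: zr[symmetric])
  hence "poly (char_poly A) (Re z) = 0" by simp
  thus ?thesis using eigenvalue_root_char_poly[OF A] by blast
qed

definition qf :: "real mat \<Rightarrow> real vec \<Rightarrow> real" where
  "qf A x = (\<Sum>i<dim_row A. \<Sum>j<dim_row A. x$i * A$$(i,j) * x$j)"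

lemma qf_scalar:
  assumes A: "A \<in> carrier_mat n n" and x: "x \<in> carrier_vec n"
  shows "x \<bullet> (A *\<^sub>v x) = qf A x"
  using A x unfolding qf_def by (auto simp: scalar_prod_def sum_distrib_left atLeast0LessThan mult.assoc intro!: sum.cong)

lemma real_cscalar: "(v :: real vec) \<bullet>c w = v \<bullet> w"
  by (auto simp: scalar_prod_def conjugate_vec_def)

lemma orthonormal_completion:
  fixes v :: "real vec"
  assumes v: "v \<in> carrier_vec n" and v0: "v \<noteq> 0\<^sub>v n"
  shows "\<exists>W c. W \<in> carrier_mat n n \<and> W\<^sup>T * W = 1\<^sub>m n \<and> W * W\<^sup>T = 1\<^sub>m n \<and> col W 0 = c \<cdot>\<^sub>v v"
proof -
  have n: "n \<noteq> 0"
  proof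
    assume "n = 0"
    hence "v = 0\<^sub>v n" using v by (intro eq_vecI) auto
    with v0 show False ..
  qed
  interpret cof_vec_space n "TYPE(real)" .
  define b where "b = basis_completion v"
  define ws where "ws = gram_schmidt n b"
  from basis_completion[OF v v0, folded b_def]
  have dist_b: "distinct b" and indep: "\<not> lin_dep (set b)" and b: "set b \<subseteq> carrier_vec n" and hdb: "hd b = v"
    and len_b: "length b = n" by auto
  from hdb len_b n obtain vs where bv: "b = v # vs" by (cases b, auto)
  from gram_schmidt_result[OF b dist_b indep refl, folded ws_def]
  have ws: "set ws \<subseteq> carrier_vec n" "corthogonal ws" "length ws = n"
    by (auto simp: len_b)
  from gram_schmidt_hd[OF v, of vs, folded bv] have hdws: "hd ws = v" unfolding ws_def .
  define us where "us = map (\<lambda>w. (1 / sqrt (w \<bullet> w)) \<cdot>\<^sub>v w) ws"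
  have lus: "length us = n" unfolding us_def using ws by simp
  have wsc: "i < n \<Longrightarrow> ws ! i \<in> carrier_vec n" for i using ws by auto
  have orth: "ws!i \<bullet> ws!j = 0 \<longleftrightarrow> i \<noteq> j" if "i<n" "j<n" for i j
    using ws(2) that ws(3) unfolding corthogonal_def real_cscalar by auto
  have sq_nonneg: "w \<bullet> w \<ge> 0" for w :: "real vec"
    unfolding scalar_prod_def by (auto intro: sum_nonneg)
  have us_orth: "us!i \<bullet> us!j = (if i = j then 1 else 0)" if "i<n" "j<n" for i j
  proof -
    have "us!i \<bullet> us!j = (1 / sqrt (ws!i \<bullet> ws!i)) * (1 / sqrt (ws!j \<bullet> ws!j)) * (ws!i \<bullet> ws!j)"
      unfolding us_def using that ws wsc[OF that(1)] wsc[OF that(2)]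
      by (simp add: smult_scalar_prod_distrib scalar_prod_smult_distrib)
    also have "\<dots> = (if i = j then 1 else 0)"
    proof (cases "i = j")
      case True
      have pos: "ws!i \<bullet> ws!i > 0" using orth[OF that(1) that(1)] sq_nonneg[of "ws!i"] by auto
      thus ?thesis using True
        by (simp add: field_simps)
    next
      case False thus ?thesis using orth[OF that] by simp
    qed
    finally show ?thesis .
  qed
  define W where "W = mat_of_cols n us"
  have W: "W \<in> carrier_mat n n" unfolding W_def using lus by auto
  have colW: "col W i = us ! i" if "i < n" for i
    unfolding W_def using that lus ws
    by (intro col_mat_of_cols) (auto simp: us_def)
  have WTW: "W\<^sup>T * W = 1\<^sub>m n"
  proof (rule eq_matI)
    fix i j assume ij: "i < dim_row (1\<^sub>m n)" "j < dim_col (1\<^sub>m n)"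
    hence "(W\<^sup>T * W) $$ (i,j) = col W i \<bullet> col W j" using W by auto
    also have "\<dots> = 1\<^sub>m n $$ (i,j)" using ij colW us_orth by auto
    finally show "(W\<^sup>T * W) $$ (i,j) = 1\<^sub>m n $$ (i,j)" .
  qed (insert W, auto)
  have WWT: "W * W\<^sup>T = 1\<^sub>m n"
    using mat_mult_left_right_inverse[OF _ W WTW] W by auto
  have "col W 0 = (1 / sqrt (v \<bullet> v)) \<cdot>\<^sub>v v"
    using colW[of 0] n hdws ws(3) unfolding us_def by (cases ws, auto)
  thus ?thesis using W WTW WWT by blast
qed

lemma qf_split:
  fixes B :: "real mat"
  assumes B: "B \<in> carrier_mat (Suc k) (Suc k)" and y: "y \<in> carrier_vec (Suc k)"
  and B0: "\<And>i. i < k \<Longrightarrow> B $$ (Suc i, 0) = 0" and B0': "\<And>i. i < k \<Longrightarrow> B $$ (0, Suc i) = 0"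
  shows "qf B y = B$$(0,0) * (y$0)^2 + qf (mat k k (\<lambda>(i,j). B$$(Suc i, Suc j))) (vec k (\<lambda>j. y$(Suc j)))"
proof -
  have "qf B y = (\<Sum>i<Suc k. \<Sum>j<Suc k. y$i * B$$(i,j) * y$j)" unfolding qf_def using B by simp
  also have "\<dots> = (\<Sum>j<Suc k. y$0 * B$$(0,j) * y$j) + (\<Sum>i<k. \<Sum>j<Suc k. y$(Suc i) * B$$(Suc i,j) * y$j)"
    by (rule sum.lessThan_Suc_shift)
  also have "(\<Sum>j<Suc k. y$0 * B$$(0,j) * y$j) = y$0 * B$$(0,0) * y$0"
    by (subst sum.lessThan_Suc_shift, simp add: B0')
  also have "(\<Sum>i<k. \<Sum>j<Suc k. y$(Suc i) * B$$(Suc i,j) * y$j) = (\<Sum>i<k. \<Sum>j<k. y$(Suc i) * B$$(Suc i,Suc j) * y$(Suc j))"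
    by (rule sum.cong[OF refl], subst sum.lessThan_Suc_shift, simp add: B0)
  also have "\<dots> = qf (mat k k (\<lambda>(i,j). B$$(Suc i, Suc j))) (vec k (\<lambda>j. y$(Suc j)))"
    unfolding qf_def by simp
  finally show ?thesis by (simp add: power2_eq_square mult.commute mult.left_commute)
qed

lemma spectral:
  fixes A :: "real mat"
  assumes "A \<in> carrier_mat n n" "A\<^sup>T = A"
  shows "\<exists>ds L. length ds = n \<and> char_poly A = (\<Prod>d\<leftarrow>ds. [:-d,1:]) \<and>
    (\<forall>i<n. \<forall>x\<in>carrier_vec n. \<forall>y\<in>carrier_vec n. \<forall>a b. L i (a \<cdot>\<^sub>v x + b \<cdot>\<^sub>v y) = a * L i x + b * L i y) \<and>
    (\<forall>x\<in>carrier_vec n. qf A x = (\<Sum>i<n. ds!i * (L i x)^2))"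
  using assms
proof (induction n arbitrary: A)
  case 0
  have A: "A \<in> carrier_mat 0 0" using 0 by simp
  have "monic (char_poly A)" "degree (char_poly A) = 0" using degree_monic_char_poly[OF A] by auto
  hence "char_poly A = 1" using monic_degree_0 by blast
  moreover have "qf A x = 0" for x unfolding qf_def using A by simp
  ultimately show ?case by (intro exI[of _ "[]"] exI[of _ "\<lambda>i x. 0"]) auto
next
  case (Suc k A)
  let ?n = "Suc k"
  have A: "A \<in> carrier_mat ?n ?n" and sym: "A\<^sup>T = A" using Suc by auto
  obtain l where "eigenvalue A l" using sym_real_eigenvalue[OF A sym] by auto
  then obtain v where "eigenvector A v l" unfolding eigenvalue_def by auto
  hence v: "v \<in> carrier_vec ?n" and v0: "v \<noteq> 0\<^sub>v ?n" and Av: "A *\<^sub>v v = l \<cdot>\<^sub>v v"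
    using A unfolding eigenvector_def by auto
  obtain W c where W: "W \<in> carrier_mat ?n ?n" and WTW: "W\<^sup>T * W = 1\<^sub>m ?n" and WWT: "W * W\<^sup>T = 1\<^sub>m ?n"
    and W0: "col W 0 = c \<cdot>\<^sub>v v"
    using orthonormal_completion[OF v v0] by blast
  have WT: "W\<^sup>T \<in> carrier_mat ?n ?n" using W by auto
  have colc: "col W i \<in> carrier_vec ?n" for i using W by (metis carrier_matD(1) carrier_vecI col_dim)
  define A' where "A' = W\<^sup>T * A * W"
  have A': "A' \<in> carrier_mat ?n ?n" unfolding A'_def using W A by auto
  have A'ij: "A'$$(i,j) = col W i \<bullet> (A *\<^sub>v col W j)" if "i < ?n" "j < ?n" for i j
  proof -
    have "A' = W\<^sup>T * (A * W)" unfolding A'_def using W A by (simp add: assoc_mult_mat[of _ ?n ?n _ ?n _ ?n])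
    hence "A'$$(i,j) = row (W\<^sup>T) i \<bullet> col (A * W) j" using that W A by auto
    thus ?thesis using that W A by (auto simp: mult_mat_vec_def)
  qed
  have Aw0: "A *\<^sub>v col W 0 = l \<cdot>\<^sub>v col W 0"
    unfolding W0 using mult_mat_vec[OF A v] Av by (simp add: smult_smult_assoc mult.commute)
  have ortho: "col W i \<bullet> col W j = (if i = j then 1 else 0)" if "i < ?n" "j < ?n" for i j
  proof -
    have "col W i \<bullet> col W j = (W\<^sup>T * W) $$ (i,j)" using that W by auto
    thus ?thesis unfolding WTW using that by auto
  qed
  have A'0: "A'$$(i,0) = (if i = 0 then l else 0)" if "i < ?n" for i
    using that A'ij[OF that] Aw0 ortho[OF that, of 0] scalar_prod_smult_distrib[OF colc colc]
    by auto
  have A'sym: "A'$$(i,j) = A'$$(j,i)" if "i < ?n" "j < ?n" for i j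
  proof -
    have "col W i \<bullet> (A *\<^sub>v col W j) = (A\<^sup>T *\<^sub>v col W i) \<bullet> col W j"
      using transpose_vec_mult_scalar[OF A colc colc] by simp
    also have "\<dots> = col W j \<bullet> (A *\<^sub>v col W i)" unfolding sym
      by (rule comm_scalar_prod[of _ ?n], insert A colc, auto)
    finally show ?thesis using A'ij that by simp
  qed
  define A3 where "A3 = mat k k (\<lambda>(i,j). A'$$(Suc i, Suc j))"
  have A3: "A3 \<in> carrier_mat k k" unfolding A3_def by auto
  have A3sym: "A3\<^sup>T = A3" unfolding A3_def by (rule eq_matI, auto simp: A'sym)
  from Suc.IH[OF A3 A3sym] obtain ds3 L3 where ds3: "length ds3 = k"
    and cp3: "char_poly A3 = (\<Prod>d\<leftarrow>ds3. [:-d,1:])"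
    and lin3: "\<forall>i<k. \<forall>x\<in>carrier_vec k. \<forall>y\<in>carrier_vec k. \<forall>a b. L3 i (a \<cdot>\<^sub>v x + b \<cdot>\<^sub>v y) = a * L3 i x + b * L3 i y"
    and qf3: "\<forall>x\<in>carrier_vec k. qf A3 x = (\<Sum>i<k. ds3!i * (L3 i x)^2)" by blast
  have A'block: "A' = four_block_mat (mat 1 1 (\<lambda>_. l)) (0\<^sub>m 1 k) (0\<^sub>m k 1) A3"
  proof (rule eq_matI)
    fix i j assume "i < dim_row (four_block_mat (mat 1 1 (\<lambda>_. l)) (0\<^sub>m 1 k) (0\<^sub>m k 1) A3)"
      "j < dim_col (four_block_mat (mat 1 1 (\<lambda>_. l)) (0\<^sub>m 1 k) (0\<^sub>m k 1) A3)"
    hence ij: "i < ?n" "j < ?n" using A3 by auto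
    show "A'$$(i,j) = four_block_mat (mat 1 1 (\<lambda>_. l)) (0\<^sub>m 1 k) (0\<^sub>m k 1) A3 $$ (i,j)"
    proof (cases "i = 0")
      case True
      thus ?thesis using ij A'0[of j] A'sym[of i j] A3 by (cases j, auto)
    next
      case False
      then obtain i' where i': "i = Suc i'" by (cases i, auto)
      show ?thesis using ij A'0[of i] A3 i' by (cases j, auto simp: A3_def)
    qed
  qed (insert A' A3, auto)
  have cp1: "char_poly (mat 1 1 (\<lambda>_. l)) = [:-l,1:]"
    by (simp add: char_poly_defs det_def sign_def)
  have "char_poly A' = [:-l,1:] * char_poly A3"
    unfolding A'block cp1[symmetric] by (rule char_poly_four_block_zeros_col, insert A3, auto)
  hence cpA': "char_poly A' = (\<Prod>d\<leftarrow>l # ds3. [:-d,1:])" using cp3 by simp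
  have AWA: "A = W * A' * W\<^sup>T"
  proof -
    have "W * A' * W\<^sup>T = (W * W\<^sup>T) * A * (W * W\<^sup>T)" unfolding A'_def using W A
      by (simp add: assoc_mult_mat[of _ ?n ?n _ ?n _ ?n])
    thus ?thesis unfolding WWT using A by simp
  qed
  have "similar_mat_wit A A' W (W\<^sup>T)" unfolding similar_mat_wit_def Let_def
    using A A' W WT WTW WWT AWA by auto
  hence "similar_mat A A'" unfolding similar_mat_def by blast
  hence cpA: "char_poly A = (\<Prod>d\<leftarrow>l # ds3. [:-d,1:])" using char_poly_similar cpA' by metis
  define L where "L = (\<lambda>i x. case i of 0 \<Rightarrow> (W\<^sup>T *\<^sub>v x)$0 | Suc i' \<Rightarrow> L3 i' (vec k (\<lambda>j. (W\<^sup>T *\<^sub>v x)$(Suc j))))"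
  have WTlin: "W\<^sup>T *\<^sub>v (a \<cdot>\<^sub>v x + b \<cdot>\<^sub>v y) = a \<cdot>\<^sub>v (W\<^sup>T *\<^sub>v x) + b \<cdot>\<^sub>v (W\<^sup>T *\<^sub>v y)"
    if "x \<in> carrier_vec ?n" "y \<in> carrier_vec ?n" for a b :: real and x y :: "real vec"
    using that WT by (simp add: mult_add_distrib_mat_vec[OF WT] mult_mat_vec[OF WT])
  have lin: "\<forall>i<?n. \<forall>x\<in>carrier_vec ?n. \<forall>y\<in>carrier_vec ?n. \<forall>a b. L i (a \<cdot>\<^sub>v x + b \<cdot>\<^sub>v y) = a * L i x + b * L i y"
  proof (intro allI impI ballI)
    fix i and x y :: "real vec" and a b :: real assume i: "i < ?n" and x: "x \<in> carrier_vec ?n" and y: "y \<in> carrier_vec ?n"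
    have Wx: "W\<^sup>T *\<^sub>v x \<in> carrier_vec ?n" "W\<^sup>T *\<^sub>v y \<in> carrier_vec ?n" using WT x y by auto
    show "L i (a \<cdot>\<^sub>v x + b \<cdot>\<^sub>v y) = a * L i x + b * L i y"
    proof (cases i)
      case 0 thus ?thesis unfolding L_def WTlin[OF x y] using Wx W by simp
    next
      case (Suc i')
      have eq: "vec k (\<lambda>j. (W\<^sup>T *\<^sub>v (a \<cdot>\<^sub>v x + b \<cdot>\<^sub>v y))$(Suc j)) = a \<cdot>\<^sub>v vec k (\<lambda>j. (W\<^sup>T *\<^sub>v x)$(Suc j)) + b \<cdot>\<^sub>v vec k (\<lambda>j. (W\<^sup>T *\<^sub>v y)$(Suc j))"
        unfolding WTlin[OF x y] using Wx W by (intro eq_vecI) auto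
      show ?thesis unfolding L_def Suc nat.case eq
        using lin3 i Suc by auto
    qed
  qed
  have qfA: "qf A x = (\<Sum>i<?n. (l # ds3)!i * (L i x)^2)" if x: "x \<in> carrier_vec ?n" for x
  proof -
    define y where "y = W\<^sup>T *\<^sub>v x"
    have y: "y \<in> carrier_vec ?n" unfolding y_def using WT x by auto
    have xy: "x = W *\<^sub>v y" unfolding y_def using W WT x
      by (simp add: assoc_mult_mat_vec[symmetric, of _ ?n ?n _ ?n] WWT)
    define z where "z = A *\<^sub>v (W *\<^sub>v y)"
    have z: "z \<in> carrier_vec ?n" unfolding z_def using A W y by auto
    have "qf A x = x \<bullet> (A *\<^sub>v x)" using qf_scalar[OF A x] by simp
    also have "\<dots> = (W *\<^sub>v y) \<bullet> z" unfolding z_def xy ..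
    also have "\<dots> = z \<bullet> (W *\<^sub>v y)" by (rule comm_scalar_prod[of _ ?n], insert W y z, auto)
    also have "\<dots> = (W\<^sup>T *\<^sub>v z) \<bullet> y" using transpose_vec_mult_scalar[OF W y z] by simp
    also have "\<dots> = y \<bullet> (W\<^sup>T *\<^sub>v z)" by (rule comm_scalar_prod[of _ ?n], insert WT y z, auto)
    also have "W\<^sup>T *\<^sub>v z = A' *\<^sub>v y" unfolding z_def A'_def using W WT A y
      by (simp add: assoc_mult_mat_vec[of _ ?n ?n _ ?n])
    also have "y \<bullet> (A' *\<^sub>v y) = qf A' y" using qf_scalar[OF A' y] .
    also have "\<dots> = l * (y$0)^2 + qf A3 (vec k (\<lambda>j. y$(Suc j)))"
    proof -
      have r0: "A'$$(0, Suc i) = 0" if "i<k" for i using A'sym[of 0 "Suc i"] A'0[of "Suc i"] that by simp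
      have c0: "A'$$(Suc i, 0) = 0" if "i<k" for i using A'0[of "Suc i"] that by simp
      show ?thesis unfolding A3_def using qf_split[OF A' y c0 r0] A'0[of 0] by simp
    qed
    also have "qf A3 (vec k (\<lambda>j. y$(Suc j))) = (\<Sum>i<k. ds3!i * (L3 i (vec k (\<lambda>j. y$(Suc j))))^2)"
      using qf3 by auto
    also have "l * (y$0)^2 + \<dots> = (\<Sum>i<?n. (l # ds3)!i * (L i x)^2)"
      unfolding sum.lessThan_Suc_shift L_def y_def by simp
    finally show ?thesis .
  qed
  show ?case
    by (intro exI[of _ "l # ds3"] exI[of _ L]) (insert ds3 cpA lin qfA, auto)
qed

lemma order_prod_linear: "Polynomial.order r (\<Prod>d\<leftarrow>ds. [:-d,1:]) = length (filter ((=) r) ds)"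
proof (induction ds)
  case Nil thus ?case by (simp add: order_0I)
next
  case (Cons d ds)
  have mon: "monic (\<Prod>e\<leftarrow>ds. [:- e, 1:])" by (rule monic_prod_list, auto)
  hence "(\<Prod>e\<leftarrow>ds. [:- e, 1:]) \<noteq> 0" by auto
  hence nz: "[:-d,1:] * (\<Prod>d\<leftarrow>ds. [:-d,1:]) \<noteq> 0" by (metis mult_eq_0_iff pCons_eq_0_iff one_neq_zero)
  show ?case using order_mult[OF nz] Cons by (simp add: order_linear')
qed

lemma num_pos_count:
  assumes A: "A \<in> carrier_mat n n" and cp: "char_poly A = (\<Prod>d\<leftarrow>ds. [:-d,1:])" and len: "length ds = n"
  shows "num_pos_eigenvalues A = card {i. i < n \<and> ds!i > 0}"
proof -
  define R where "R = {r. r > 0 \<and> r \<in> set ds}"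
  have R: "{r. r > 0 \<and> eigenvalue A r} = R"
    unfolding R_def eigenvalue_root_char_poly[OF A] cp by (auto simp: poly_prod_list_zero_iff)
  have "num_pos_eigenvalues A = (\<Sum>r\<in>R. card {i. i < n \<and> ds!i = r})"
    unfolding num_pos_eigenvalues_def R cp order_prod_linear length_filter_conv_card len
    by (intro sum.cong refl) (metis)
  also have "\<dots> = card (\<Union>r\<in>R. {i. i < n \<and> ds!i = r})"
    by (rule card_UN_disjoint[symmetric]) (auto simp: R_def)
  also have "(\<Union>r\<in>R. {i. i < n \<and> ds!i = r}) = {i. i < n \<and> ds!i > 0}"
    unfolding R_def using len by auto
  finally show ?thesis .
qed

definition Bf :: "real mat \<Rightarrow> (nat \<Rightarrow> real) \<Rightarrow> (nat \<Rightarrow> real) \<Rightarrow> real" where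
  "Bf A f g = (\<Sum>i<dim_row A. \<Sum>j<dim_row A. f i * g j * A$$(i,j))"

lemma Bf_vec: assumes A: "A \<in> carrier_mat n n"
  shows "vec n f \<bullet> (A *\<^sub>v vec n g) = Bf A f g"
  using A unfolding Bf_def by (auto simp: scalar_prod_def sum_distrib_left atLeast0LessThan mult.assoc mult.commute mult.left_commute intro!: sum.cong)

lemma no_pd2:
  fixes A :: "real mat"
  assumes A: "A \<in> carrier_mat n n" and sym: "A\<^sup>T = A" and np: "num_pos_eigenvalues A \<le> 1"
  and pos: "Bf A f f > 0" and pd: "Bf A f f * Bf A g g > (Bf A f g)^2"
  shows False
proof -
  obtain ds L where len: "length ds = n" and cp: "char_poly A = (\<Prod>d\<leftarrow>ds. [:-d,1:])"
    and lin: "\<forall>i<n. \<forall>x\<in>carrier_vec n. \<forall>y\<in>carrier_vec n. \<forall>a b. L i (a \<cdot>\<^sub>v x + b \<cdot>\<^sub>v y) = a * L i x + b * L i y"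
    and q: "\<forall>x\<in>carrier_vec n. qf A x = (\<Sum>i<n. ds!i * (L i x)^2)"
    using spectral[OF A sym] by blast
  define P where "P = {i. i < n \<and> ds!i > 0}"
  have cardP: "card P \<le> 1" using np num_pos_count[OF A cp len] unfolding P_def by simp
  define u where "u = vec n f"
  define v where "v = vec n g"
  have uv: "u \<in> carrier_vec n" "v \<in> carrier_vec n" unfolding u_def v_def by auto
  have symB: "v \<bullet> (A *\<^sub>v u) = u \<bullet> (A *\<^sub>v v)"
  proof -
    have "u \<bullet> (A *\<^sub>v v) = (A\<^sup>T *\<^sub>v u) \<bullet> v" using transpose_vec_mult_scalar[OF A uv(2) uv(1)] by simp
    also have "\<dots> = v \<bullet> (A *\<^sub>v u)" unfolding sym by (rule comm_scalar_prod[of _ n], insert A uv, auto)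
    finally show ?thesis by simp
  qed
  define a where "a = qf A u"
  define b where "b = u \<bullet> (A *\<^sub>v v)"
  define c where "c = qf A v"
  have abc: "a = Bf A f f" "b = Bf A f g" "c = Bf A g g"
    unfolding a_def b_def c_def u_def v_def using qf_scalar[OF A] Bf_vec[OF A] by (metis vec_carrier)+
  have expand: "qf A (x \<cdot>\<^sub>v u + y \<cdot>\<^sub>v v) = x^2 * a + 2 * x * y * b + y^2 * c" for x y
  proof -
    have w: "x \<cdot>\<^sub>v u + y \<cdot>\<^sub>v v \<in> carrier_vec n" using uv by auto
    have Au: "A *\<^sub>v u \<in> carrier_vec n" "A *\<^sub>v v \<in> carrier_vec n" using A uv by auto
    have "qf A (x \<cdot>\<^sub>v u + y \<cdot>\<^sub>v v) = (x \<cdot>\<^sub>v u + y \<cdot>\<^sub>v v) \<bullet> (A *\<^sub>v (x \<cdot>\<^sub>v u + y \<cdot>\<^sub>v v))"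
      using qf_scalar[OF A w] by simp
    also have "A *\<^sub>v (x \<cdot>\<^sub>v u + y \<cdot>\<^sub>v v) = x \<cdot>\<^sub>v (A *\<^sub>v u) + y \<cdot>\<^sub>v (A *\<^sub>v v)"
      using uv A by (simp add: mult_add_distrib_mat_vec[OF A] mult_mat_vec[OF A])
    also have "(x \<cdot>\<^sub>v u + y \<cdot>\<^sub>v v) \<bullet> (x \<cdot>\<^sub>v (A *\<^sub>v u) + y \<cdot>\<^sub>v (A *\<^sub>v v))
       = x * x * (u \<bullet> (A *\<^sub>v u)) + x * y * (u \<bullet> (A *\<^sub>v v)) + y * x * (v \<bullet> (A *\<^sub>v u)) + y * y * (v \<bullet> (A *\<^sub>v v))"
      using uv Au
      by (simp add: add_scalar_prod_distrib[of _ n] scalar_prod_add_distrib[of _ n]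
          smult_scalar_prod_distrib[of _ n] scalar_prod_smult_distrib[of _ n] algebra_simps)
    finally show ?thesis unfolding a_def c_def b_def using qf_scalar[OF A] uv symB
      by (simp add: power2_eq_square algebra_simps)
  qed
  have nonpos: "qf A w \<le> 0" if w: "w \<in> carrier_vec n" and z: "\<forall>i\<in>P. L i w = 0" for w
  proof -
    have "qf A w = (\<Sum>i<n. ds!i * (L i w)^2)" using q w by auto
    also have "\<dots> \<le> 0"
    proof (rule sum_nonpos)
      fix i assume "i \<in> {..<n}"
      thus "ds!i * (L i w)^2 \<le> 0" using z unfolding P_def
        by (cases "ds!i > 0") (auto intro: mult_nonpos_nonneg)
    qed
    finally show ?thesis .
  qed
  have a: "a > 0" and acb: "a * c > b^2" using pos pd abc by auto
  show False
  proof (cases "P = {}")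
    case True
    have "qf A u \<le> 0" using nonpos[OF uv(1)] True by auto
    with a show False unfolding a_def by simp
  next
    case False
    then obtain i0 where P: "P = {i0}" using cardP by (metis card_1_singletonE card_0_eq finite_subset
      le_Suc_eq One_nat_def P_def finite_Collect_less_nat mem_Collect_eq subsetI le_zero_eq)
    hence i0: "i0 < n" unfolding P_def by auto
    define x where "x = L i0 v"
    define y where "y = - L i0 u"
    define w where "w = x \<cdot>\<^sub>v u + y \<cdot>\<^sub>v v"
    have w: "w \<in> carrier_vec n" unfolding w_def using uv by auto
    have "L i0 w = 0" unfolding w_def using lin i0 uv by (simp add: x_def y_def)
    hence "qf A w \<le> 0" using nonpos[OF w] P by auto
    hence le: "x^2 * a + 2 * x * y * b + y^2 * c \<le> 0" using expand unfolding w_def by simp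
    show False
    proof (cases "y = 0")
      case True
      hence "L i0 u = 0" unfolding y_def by simp
      hence "qf A u \<le> 0" using nonpos[OF uv(1)] P by auto
      with a show False unfolding a_def by simp
    next
      case False
      have "a * (x^2 * a + 2 * x * y * b + y^2 * c) = (a*x + b*y)^2 + (a*c - b^2) * y^2"
        by (simp add: power2_eq_square algebra_simps)
      moreover have "(a*c - b^2) * y^2 > 0" using acb False by simp
      moreover have "a * (x^2 * a + 2 * x * y * b + y^2 * c) \<le> 0" using le a by (simp add: mult_nonneg_nonpos)
      ultimately show False by (smt (verit) zero_le_power2)
    qed
  qed
qed


lemma deg_part_vadd: "x \<in> deg_part b i \<Longrightarrow> y \<in> deg_part b i \<Longrightarrow> vadd x y \<in> deg_part b i"
  unfolding deg_part_def vadd_def by auto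
lemma deg_part_vsmult: "x \<in> deg_part b i \<Longrightarrow> vsmult c x \<in> deg_part b i"
  unfolding deg_part_def vsmult_def by auto
lemma deg_part_vzero: "vzero \<in> deg_part b i"
  unfolding deg_part_def vzero_def by auto
lemma deg_part_std: "k < b i \<Longrightarrow> std_basis k \<in> deg_part b i"
  unfolding deg_part_def std_basis_def by auto

lemma additive_on_zero:
  assumes "additive_on (deg_part b i) f" shows "f vzero = 0"
proof -
  have "f (vadd vzero vzero) = f vzero + f vzero" using assms deg_part_vzero unfolding additive_on_def by blast
  moreover have "vadd vzero vzero = vzero" unfolding vadd_def vzero_def by simp
  ultimately show ?thesis by simp
qed

lemma additive_on_smult_nat:
  assumes f: "additive_on (deg_part b i) f" and x: "x \<in> deg_part b i"
  shows "f (vsmult (int n) x) = int n * f x"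
proof (induction n)
  case 0
  have "vsmult (int 0) x = vzero" unfolding vsmult_def vzero_def by simp
  thus ?case using additive_on_zero[OF f] by simp
next
  case (Suc n)
  have "vsmult (int (Suc n)) x = vadd (vsmult (int n) x) x" unfolding vsmult_def vadd_def by (auto simp: algebra_simps)
  moreover have "f (vadd (vsmult (int n) x) x) = f (vsmult (int n) x) + f x"
    using f deg_part_vsmult[OF x] x unfolding additive_on_def by blast
  ultimately have "f (vsmult (int (Suc n)) x) = f (vsmult (int n) x) + f x" by simp
  thus ?case using Suc by (simp add: algebra_simps)
qed

lemma additive_on_smult:
  assumes f: "additive_on (deg_part b i) f" and x: "x \<in> deg_part b i"
  shows "f (vsmult c x) = c * f x"
proof (cases "c \<ge> 0")
  case True
  then obtain n where "c = int n" by (rule nonneg_int_cases)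
  thus ?thesis using additive_on_smult_nat[OF f x] by simp
next
  case False
  hence "c < 0" by simp
  then obtain n where n: "c = - int n" using neg_int_cases by blast
  have "vadd (vsmult c x) (vsmult (int n) x) = vzero" unfolding vsmult_def vadd_def vzero_def n by auto
  moreover have "f (vadd (vsmult c x) (vsmult (int n) x)) = f (vsmult c x) + f (vsmult (int n) x)"
    using f deg_part_vsmult[OF x] unfolding additive_on_def by blast
  ultimately have "f (vsmult c x) + f (vsmult (int n) x) = 0"
    using additive_on_zero[OF f] by simp
  thus ?thesis using additive_on_smult_nat[OF f x] n by simp
qed

lemma additive_on_expand:
  assumes f: "additive_on (deg_part b i) f" and x: "x \<in> deg_part b i"
  shows "f x = (\<Sum>k<b i. x k * f (std_basis k))"
proof -
  define tr where "tr j = (\<lambda>k. if k < j then x k else (0::int))" for j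
  have trD: "tr j \<in> deg_part b i" for j using x unfolding tr_def deg_part_def by auto
  have main: "j \<le> b i \<Longrightarrow> f (tr j) = (\<Sum>k<j. x k * f (std_basis k))" for j
  proof (induction j)
    case 0
    have "tr 0 = vzero" unfolding tr_def vzero_def by simp
    thus ?case using additive_on_zero[OF f] by simp
  next
    case (Suc j)
    have "tr (Suc j) = vadd (tr j) (vsmult (x j) (std_basis j))"
      unfolding tr_def vadd_def vsmult_def std_basis_def by (auto intro!: ext simp: less_Suc_eq)
    hence "f (tr (Suc j)) = f (tr j) + f (vsmult (x j) (std_basis j))"
      using f trD deg_part_vsmult deg_part_std Suc.prems unfolding additive_on_def
      by (metis Suc_le_lessD)
    also have "f (vsmult (x j) (std_basis j)) = x j * f (std_basis j)"
      using additive_on_smult[OF f deg_part_std] Suc.prems by simp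
    finally show ?case using Suc by simp
  qed
  have "tr (b i) = x" using x unfolding tr_def deg_part_def by (auto intro!: ext)
  thus ?thesis using main[of "b i"] by simp
qed

locale CA =
  fixes b m p
  assumes ca: "cohomology_algebra b m p"
begin

abbreviation "D \<equiv> deg_part b"

lemmas cad = ca[unfolded cohomology_algebra_def]
lemmas mul_deg = cad[THEN conjunct2, THEN conjunct1, rule_format]
lemmas bil_l = cad[THEN conjunct2, THEN conjunct2, THEN conjunct1, rule_format]
lemmas bil_r = cad[THEN conjunct2, THEN conjunct2, THEN conjunct2, THEN conjunct1, rule_format]
lemmas assoc = cad[THEN conjunct2, THEN conjunct2, THEN conjunct2, THEN conjunct2, THEN conjunct1, rule_format]
lemmas comm = cad[THEN conjunct2, THEN conjunct2, THEN conjunct2, THEN conjunct2, THEN conjunct2, THEN conjunct1, rule_format]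
lemmas p_add = cad[THEN conjunct2, THEN conjunct2, THEN conjunct2, THEN conjunct2, THEN conjunct2, THEN conjunct2, THEN conjunct2, THEN conjunct1]
lemmas pairing = cad[THEN conjunct2, THEN conjunct2, THEN conjunct2, THEN conjunct2, THEN conjunct2, THEN conjunct2, THEN conjunct2, THEN conjunct2, THEN conjunct2, rule_format]

lemma additive_left:
  assumes ij: "i + j \<le> 4" and y: "y \<in> D j" and g: "additive_on (D (i + j)) g"
  shows "additive_on (D i) (\<lambda>x. g (m i j x y))"
  unfolding additive_on_def
proof (intro ballI)
  fix x x' assume x: "x \<in> D i" and x': "x' \<in> D i"
  have e: "m i j (vadd x x') y = vadd (m i j x y) (m i j x' y)" using bil_l[OF ij x x' y] .
  have "m i j x y \<in> D (i+j)" "m i j x' y \<in> D (i+j)" using mul_deg[OF ij] x x' y by auto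
  thus "g (m i j (vadd x x') y) = g (m i j x y) + g (m i j x' y)"
    unfolding e using g unfolding additive_on_def by blast
qed

lemma additive_right:
  assumes ij: "i + j \<le> 4" and x: "x \<in> D i" and g: "additive_on (D (i + j)) g"
  shows "additive_on (D j) (\<lambda>y. g (m i j x y))"
  unfolding additive_on_def
proof (intro ballI)
  fix y y' assume y: "y \<in> D j" and y': "y' \<in> D j"
  have e: "m i j x (vadd y y') = vadd (m i j x y) (m i j x y')" using bil_r[OF ij x y y'] .
  have "m i j x y \<in> D (i+j)" "m i j x y' \<in> D (i+j)" using mul_deg[OF ij] x y y' by auto
  thus "g (m i j x (vadd y y')) = g (m i j x y) + g (m i j x y')"
    unfolding e using g unfolding additive_on_def by blast
qed

lemma coord_add: "additive_on (D i) (\<lambda>x. x r)"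
  unfolding additive_on_def vadd_def by auto

lemma vsmult_one: "vsmult 1 x = x" unfolding vsmult_def by simp

lemma sq_zero: assumes x: "x \<in> D 1" shows "m 1 1 x x = vzero"
proof -
  have e: "m 1 1 x x = vsmult (-1) (m 1 1 x x)" using comm[of 1 1 x x] x by simp
  have "m 1 1 x x r = 0" for r using fun_cong[OF e, of r] unfolding vsmult_def by simp
  thus ?thesis unfolding vzero_def by (intro ext) simp
qed

end


lemma Bf_lc_l: "Bf A (\<lambda>k. a * f k + c * g k) h = a * Bf A f h + c * Bf A g h"
  unfolding Bf_def by (simp add: algebra_simps sum.distrib sum_distrib_left)
lemma Bf_lc_r: "Bf A h (\<lambda>k. a * f k + c * g k) = a * Bf A h f + c * Bf A h g"
  unfolding Bf_def by (simp add: algebra_simps sum.distrib sum_distrib_left)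
lemma Bf_sym: assumes "\<And>i j. i < dim_row A \<Longrightarrow> j < dim_row A \<Longrightarrow> A$$(i,j) = A$$(j,i)"
  shows "Bf A f g = Bf A g f"
  unfolding Bf_def by (subst sum.swap) (auto simp: assms mult.commute intro!: sum.cong)

definition R :: "(nat \<Rightarrow> int) \<Rightarrow> nat \<Rightarrow> real" where "R u = (\<lambda>k. real_of_int (u k))"

context CA begin

abbreviation "Q4 x y z w \<equiv> p (m 2 2 (m 1 1 x y) (m 1 1 z w))"

lemma d11: assumes "x \<in> D 1" "y \<in> D 1" shows "m 1 1 x y \<in> D 2"
proof -
  have le: "(1::nat) + 1 \<le> 4" by simp
  show ?thesis using mul_deg[OF le assms, unfolded one_add_one] .
qed

lemma neg11: "x \<in> D 1 \<Longrightarrow> y \<in> D 1 \<Longrightarrow> m 1 1 y x = vsmult (-1) (m 1 1 x y)"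
  using comm[of 1 1 y x] by simp

lemma addL22: "z \<in> D 2 \<Longrightarrow> additive_on (D 2) (\<lambda>u. p (m 2 2 u z))"
  using additive_left[of 2 2 z p] p_add by simp
lemma addR22: "u \<in> D 2 \<Longrightarrow> additive_on (D 2) (\<lambda>z. p (m 2 2 u z))"
  using additive_right[of 2 2 u p] p_add by simp

lemma addH: assumes x: "x \<in> D 1" and w: "w \<in> D 1"
  shows "additive_on (D 2) (\<lambda>u. p (m 1 3 x (m 2 1 u w)))"
proof -
  have "additive_on (D 3) (\<lambda>v. p (m 1 3 x v))" using additive_right[of 1 3 x p] p_add x by simp
  thus ?thesis using additive_left[of 2 1 w "\<lambda>v. p (m 1 3 x v)"] w by simp
qed

lemma Q4_assoc: assumes "x \<in> D 1" "y \<in> D 1" "z \<in> D 1" "w \<in> D 1"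
  shows "Q4 x y z w = p (m 1 3 x (m 2 1 (m 1 1 y z) w))"
proof -
  have le1: "(1::nat)+1+2 \<le> 4" by simp
  have three: "(1::nat)+2 = 3" by simp
  have le2: "(1::nat)+1+1 \<le> 4" by simp
  have e1: "m 2 2 (m 1 1 x y) (m 1 1 z w) = m 1 3 x (m 1 2 y (m 1 1 z w))"
    using assoc[OF le1 assms(1,2) d11[OF assms(3,4)], unfolded one_add_one three] .
  have e2: "m 2 1 (m 1 1 y z) w = m 1 2 y (m 1 1 z w)"
    using assoc[OF le2 assms(2,3,4), unfolded one_add_one] .
  show ?thesis unfolding e1 e2 ..
qed

lemma swap12: assumes "x \<in> D 1" "y \<in> D 1" "z \<in> D 1" "w \<in> D 1"
  shows "Q4 y x z w = - Q4 x y z w"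
  using neg11[of x y] additive_on_smult[OF addL22[OF d11[of z w]] d11[of x y], of "-1"] assms by simp

lemma swap34: assumes "x \<in> D 1" "y \<in> D 1" "z \<in> D 1" "w \<in> D 1"
  shows "Q4 x y w z = - Q4 x y z w"
  using neg11[of z w] additive_on_smult[OF addR22[OF d11[of x y]] d11[of z w], of "-1"] assms by simp

lemma swap23: assumes "x \<in> D 1" "y \<in> D 1" "z \<in> D 1" "w \<in> D 1"
  shows "Q4 x z y w = - Q4 x y z w"
  using Q4_assoc[of x y z w] Q4_assoc[of x z y w] neg11[of y z]
    additive_on_smult[OF addH[of x w] d11[of y z], of "-1"] assms by simp

lemma zero12: assumes "x \<in> D 1" "z \<in> D 1" "w \<in> D 1" shows "Q4 x x z w = 0"
  using sq_zero[of x] additive_on_zero[OF addL22[OF d11[of z w]]] assms by simp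
lemma zero34: assumes "x \<in> D 1" "y \<in> D 1" "z \<in> D 1" shows "Q4 x y z z = 0"
  using sq_zero[of z] additive_on_zero[OF addR22[OF d11[of x y]]] assms by simp
lemma zero23: assumes "x \<in> D 1" "y \<in> D 1" "w \<in> D 1" shows "Q4 x y y w = 0"
  using Q4_assoc[of x y y w] sq_zero[of y] additive_on_zero[OF addH[of x w]] assms by simp

abbreviation "Gam u v \<equiv> p (m 2 2 u v)"

lemma Gam_sym: "u \<in> D 2 \<Longrightarrow> v \<in> D 2 \<Longrightarrow> Gam u v = Gam v u"
  using comm[of 2 2 u v] vsmult_one by simp

lemma Gam_expand: assumes u: "u \<in> D 2" and v: "v \<in> D 2"
  shows "Gam u v = (\<Sum>k<b 2. \<Sum>l<b 2. u k * v l * Gam (std_basis k) (std_basis l))"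
proof -
  have "Gam u v = (\<Sum>l<b 2. v l * Gam u (std_basis l))"
    using additive_on_expand[OF addR22[OF u] v] .
  also have "\<dots> = (\<Sum>l<b 2. v l * (\<Sum>k<b 2. u k * Gam (std_basis k) (std_basis l)))"
    using additive_on_expand[OF addL22[OF deg_part_std] u] by simp
  also have "\<dots> = (\<Sum>k<b 2. \<Sum>l<b 2. u k * v l * Gam (std_basis k) (std_basis l))"
    by (subst sum.swap) (simp add: sum_distrib_left algebra_simps)
  finally show ?thesis .
qed

abbreviation "GM \<equiv> Gamma_matrix b m p"

lemma GM_carrier: "GM \<in> carrier_mat (b 2) (b 2)"
  unfolding Gamma_matrix_def by simp
lemma GM_index: "k < b 2 \<Longrightarrow> l < b 2 \<Longrightarrow> GM $$ (k,l) = real_of_int (Gam (std_basis k) (std_basis l))"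
  unfolding Gamma_matrix_def Gamma_form_def by simp
lemma GM_sym': "k < b 2 \<Longrightarrow> l < b 2 \<Longrightarrow> GM $$ (k,l) = GM $$ (l,k)"
  using GM_index Gam_sym deg_part_std by metis
lemma GM_sym: "GM\<^sup>T = GM"
  by (rule eq_matI) (auto simp: GM_carrier[THEN carrier_matD(1)] GM_carrier[THEN carrier_matD(2)] GM_sym')

lemma Bf_GM: assumes "u \<in> D 2" "v \<in> D 2" shows "Bf GM (R u) (R v) = real_of_int (Gam u v)"
  unfolding Bf_def R_def Gam_expand[OF assms] using GM_carrier
  by (simp add: GM_index)

lemma Bf_GM_sym: "Bf GM f g = Bf GM g f"
  by (rule Bf_sym) (use GM_carrier GM_sym' in auto)

end


lemma hyperbolic:
  fixes B :: "(nat \<Rightarrow> real) \<Rightarrow> (nat \<Rightarrow> real) \<Rightarrow> real"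
  assumes L: "\<And>a f c g h. B (\<lambda>k. a * f k + c * g k) h = a * B f h + c * B g h"
  and Rr: "\<And>a f c g h. B h (\<lambda>k. a * f k + c * g k) = a * B h f + c * B h g"
  and S: "\<And>f g. B f g = B g f"
  and UU: "B U U = 0" and VV: "B V V = 0" and UV: "B U V = 0"
  and a1: "B W1 U = a1" and b1: "B W1 V = b1" and a2: "B W2 U = a2" and b2: "B W2 V = b2"
  and d: "a1 * b2 - a2 * b1 \<noteq> 0"
  shows "\<exists>f g. B f f > 0 \<and> B f f * B g g > (B f g)^2"
proof -
  define dd where "dd = a1 * b2 - a2 * b1"
  define w1 where "w1 = (\<lambda>k. (b2/dd) * W1 k + (-b1/dd) * W2 k)"
  define w2 where "w2 = (\<lambda>k. (-a2/dd) * W1 k + (a1/dd) * W2 k)"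
  have dd: "dd \<noteq> 0" unfolding dd_def using d .
  have frac: "x/dd*z + y/dd*w = (x*z+y*w)/dd" for x y z w by (simp add: add_divide_distrib)
  have n1: "b2*a1 + -b1*a2 = dd" "b2*b1 + -b1*b2 = 0" "-a2*a1 + a1*a2 = 0" "-a2*b1 + a1*b2 = dd"
    unfolding dd_def by (simp_all add: algebra_simps)
  have w1U: "B w1 U = 1" unfolding w1_def L unfolding a1 a2 frac n1 using dd by simp
  have w1V: "B w1 V = 0" unfolding w1_def L unfolding b1 b2 frac n1 by simp
  have w2U: "B w2 U = 0" unfolding w2_def L unfolding a1 a2 frac n1 by simp
  have w2V: "B w2 V = 1" unfolding w2_def L unfolding b1 b2 frac n1 using dd by simp
  define \<alpha> where "\<alpha> = B w1 w1"
  define \<beta> where "\<beta> = B w1 w2"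
  define \<gamma> where "\<gamma> = B w2 w2"
  define h1 where "h1 = (\<lambda>k. 1 * (\<lambda>k. 1 * w1 k + (-\<alpha>/2) * U k) k + (-\<beta>) * V k)"
  define h2 where "h2 = (\<lambda>k. 1 * w2 k + (-\<gamma>/2) * V k)"
  define f where "f = (\<lambda>k. 1 * U k + 1 * h1 k)"
  define g where "g = (\<lambda>k. 1 * V k + 1 * h2 k)"
  have at: "B U w1 = 1" "B V w1 = 0" "B U w2 = 0" "B V w2 = 1" "B V U = 0" "B w2 w1 = \<beta>"
    using w1U w1V w2U w2V UV S \<beta>_def by metis+
  have ff: "B f f = 2" unfolding f_def h1_def L Rr
    by (simp add: UU VV UV at w1U w1V w2U w2V \<alpha>_def[symmetric] \<beta>_def[symmetric] \<gamma>_def[symmetric] algebra_simps)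
  have gg: "B g g = 2" unfolding g_def h2_def L Rr
    by (simp add: UU VV UV at w1U w1V w2U w2V \<alpha>_def[symmetric] \<beta>_def[symmetric] \<gamma>_def[symmetric] algebra_simps)
  have fg: "B f g = 0" unfolding f_def g_def h1_def h2_def L Rr
    by (simp add: UU VV UV at w1U w1V w2U w2V \<alpha>_def[symmetric] \<beta>_def[symmetric] \<gamma>_def[symmetric] algebra_simps)
  show ?thesis using ff gg fg by (intro exI[of _ f] exI[of _ g]) simp
qed

lemma indep2_minor:
  fixes u v :: "nat \<Rightarrow> int"
  assumes uv: "u \<noteq> v" and ind: "int_lin_indep {u,v}"
  shows "\<exists>i j. u i * v j - u j * v i \<noteq> 0"
proof (rule ccontr)
  assume "\<not> ?thesis"
  hence mz: "\<And>i j. u i * v j - u j * v i = 0" by auto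
  have indc: "\<And>c. (\<forall>k. c u * u k + c v * v k = 0) \<Longrightarrow> c u = 0 \<and> c v = 0"
    using ind uv unfolding int_lin_indep_def by auto
  show False
  proof (cases "\<forall>k. u k = 0")
    case True
    define c where "c = (\<lambda>s. if s = u then (1::int) else 0)"
    have "c u = 0" using indc[of c] True uv unfolding c_def by auto
    thus False unfolding c_def by simp
  next
    case False
    then obtain i where i: "u i \<noteq> 0" by auto
    define c where "c = (\<lambda>s. if s = u then v i else - u i)"
    have "\<forall>k. c u * u k + c v * v k = 0" unfolding c_def using uv mz[of i]
      by (auto simp: algebra_simps)
    hence "c v = 0" using indc by blast
    thus False using i uv unfolding c_def by simp
  qed
qed

lemma subset_indep: "int_lin_indep S \<Longrightarrow> T \<subseteq> S \<Longrightarrow> int_lin_indep T"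
proof -
  assume S: "int_lin_indep S" and TS: "T \<subseteq> S"
  have fin: "finite S" using S unfolding int_lin_indep_def by simp
  show "int_lin_indep T" unfolding int_lin_indep_def
  proof (intro conjI allI impI ballI)
    show "finite T" using fin TS finite_subset by auto
    fix c s assume z: "\<forall>k. (\<Sum>s\<in>T. c s * s k) = 0" and s: "s \<in> T"
    define c' where "c' = (\<lambda>s. if s \<in> T then c s else 0)"
    have "(\<Sum>s\<in>S. c' s * s k) = (\<Sum>s\<in>T. c s * s k)" for k
    proof -
      have "(\<Sum>s\<in>S. c' s * s k) = (\<Sum>s\<in>T. c' s * s k)"
        using fin TS by (intro sum.mono_neutral_right) (auto simp: c'_def)
      also have "\<dots> = (\<Sum>s\<in>T. c s * s k)" by (simp add: c'_def)
      finally show ?thesis .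
    qed
    hence "\<forall>k. (\<Sum>s\<in>S. c' s * s k) = 0" using z by simp
    hence "c' s = 0" using S s TS unfolding int_lin_indep_def by blast
    thus "c s = 0" using s unfolding c'_def by simp
  qed
qed

lemma zrank_le1:
  assumes H: "\<And>u v. u \<in> H \<Longrightarrow> v \<in> H \<Longrightarrow> u \<noteq> v \<Longrightarrow> \<not> int_lin_indep {u,v}"
  shows "zrank H \<le> 1"
proof -
  define P where "P = (\<lambda>n. \<exists>S. S \<subseteq> H \<and> int_lin_indep S \<and> card S = n)"
  have P0: "P 0" unfolding P_def int_lin_indep_def by (intro exI[of _ "{}"]) auto
  have bnd: "n \<le> 1" if "P n" for n
  proof (rule ccontr)
    assume "\<not> n \<le> 1"
    from that obtain S where S: "S \<subseteq> H" "int_lin_indep S" "card S = n" unfolding P_def by blast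
    have fin: "finite S" using S unfolding int_lin_indep_def by simp
    have "\<not> card S \<le> Suc 0" using S \<open>\<not> n \<le> 1\<close> by simp
    then obtain u v where uv: "u \<in> S" "v \<in> S" "u \<noteq> v" using card_le_Suc0_iff_eq[OF fin] by blast
    have "int_lin_indep {u,v}" using subset_indep[OF S(2)] uv by auto
    thus False using H uv S by blast
  qed
  have "P (Greatest P)" using GreatestI_nat[of P 0 1] P0 bnd by blast
  hence "Greatest P \<le> 1" using bnd by blast
  thus ?thesis unfolding zrank_def P_def by simp
qed


locale BP = CA +
  assumes np: "num_pos_eigenvalues (Gamma_matrix b m p) = 1"
begin

lemma no_pd: "\<not> (Bf GM f f > 0 \<and> Bf GM f f * Bf GM g g > (Bf GM f g)^2)"
  using no_pd2[OF GM_carrier GM_sym] np by fastforce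

lemma BQ: assumes "a \<in> D 1" "b' \<in> D 1" "c \<in> D 1" "d \<in> D 1"
  shows "Bf GM (R (m 1 1 a b')) (R (m 1 1 c d)) = real_of_int (Q4 a b' c d)"
  using Bf_GM[OF d11 d11] assms by simp

lemma quad_zero: assumes x: "x \<in> D 1" and y: "y \<in> D 1" and z: "z \<in> D 1" and w: "w \<in> D 1"
  shows "Q4 x y z w = 0"
proof (rule ccontr)
  define a where "a = Q4 x y z w"
  assume "Q4 x y z w \<noteq> 0"
  hence a0: "a \<noteq> 0" unfolding a_def .
  define s where "s = (if a > 0 then 1 else -1 :: real)"
  have sa: "s * real_of_int a > 0" unfolding s_def using a0 by auto
  have s2: "s * s = 1" unfolding s_def by simp
  note D1 = x y z w
  have q1: "Q4 x y x y = 0" using swap23[of x x y y] zero12[of x y y] D1 by simp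
  have q2: "Q4 z w z w = 0" using swap23[of z z w w] zero12[of z w w] D1 by simp
  have q3: "Q4 x z x z = 0" using swap23[of x x z z] zero12[of x z z] D1 by simp
  have q4: "Q4 y w y w = 0" using swap23[of y y w w] zero12[of y w w] D1 by simp
  have q5: "Q4 x z y w = - a" using swap23[of x y z w] D1 unfolding a_def by simp
  have q6: "Q4 z w x y = a" using Gam_sym[OF d11[OF z w] d11[OF x y]] unfolding a_def .
  have q7: "Q4 y w x z = - a" using Gam_sym[OF d11[OF y w] d11[OF x z]] q5 by simp
  have q8: "Q4 x y x z = 0" using swap23[of x x y z] zero12[of x y z] D1 by simp
  have q9: "Q4 x y y w = 0" using zero23[of x y w] D1 by simp
  have q10: "Q4 z w x z = 0"
    using swap23[of z x w z] swap34[of z x z w] swap23[of z z x w] zero12[of z x w] D1 by simp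
  have q11: "Q4 z w y w = 0" using swap34[of z w w y] zero23[of z w y] D1 by simp
  define f where "f = (\<lambda>k. 1 * R (m 1 1 x y) k + s * R (m 1 1 z w) k)"
  define g where "g = (\<lambda>k. 1 * R (m 1 1 x z) k + (- s) * R (m 1 1 y w) k)"
  note B = BQ[OF x y x y] BQ[OF x y z w] BQ[OF z w x y] BQ[OF z w z w]
    BQ[OF x z x z] BQ[OF x z y w] BQ[OF y w x z] BQ[OF y w y w]
    BQ[OF x y x z] BQ[OF x y y w] BQ[OF z w x z] BQ[OF z w y w]
  have ff: "Bf GM f f = 2 * (s * a)" unfolding f_def Bf_lc_l Bf_lc_r B q1 q2 q6 a_def[symmetric]
    by (simp add: algebra_simps)
  have gg: "Bf GM g g = 2 * (s * a)" unfolding g_def Bf_lc_l Bf_lc_r B q3 q4 q5 q7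
    by (simp add: s2 algebra_simps)
  have fg: "Bf GM f g = 0" unfolding f_def g_def Bf_lc_l Bf_lc_r B q8 q9 q10 q11
    by simp
  have "Bf GM f f > 0 \<and> Bf GM f f * Bf GM g g > (Bf GM f g)^2"
    unfolding ff gg fg using sa mult_pos_pos[OF sa sa] by (simp add: algebra_simps)
  thus False using no_pd by blast
qed

lemma IT_elem: "u \<in> I_T b m \<Longrightarrow> \<exists>F c. finite F \<and> F \<subseteq> {m 1 1 x y |x y. x \<in> D 1 \<and> y \<in> D 1} \<and> u = (\<lambda>k. \<Sum>s\<in>F. c s * s k)"
  unfolding I_T_def int_span_def by blast

lemma IT_D2: assumes "u \<in> I_T b m" shows "u \<in> D 2"
proof -
  obtain F c where F: "finite F" "F \<subseteq> {m 1 1 x y |x y. x \<in> D 1 \<and> y \<in> D 1}" and u: "u = (\<lambda>k. \<Sum>s\<in>F. c s * s k)"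
    using IT_elem[OF assms] by blast
  have "s \<in> D 2" if "s \<in> F" for s using F(2) that d11 by blast
  thus ?thesis unfolding u deg_part_def by auto
qed

lemma Bf_sum_l: "Bf A (\<lambda>k. \<Sum>s\<in>F. c s * g s k) h = (\<Sum>s\<in>F. c s * Bf A (g s) h)"
proof -
  have "Bf A (\<lambda>k. \<Sum>s\<in>F. c s * g s k) h = (\<Sum>i<dim_row A. \<Sum>j<dim_row A. \<Sum>s\<in>F. c s * (g s i * h j * A$$(i,j)))"
    unfolding Bf_def by (simp add: sum_distrib_right mult.assoc)
  also have "\<dots> = (\<Sum>i<dim_row A. \<Sum>s\<in>F. \<Sum>j<dim_row A. c s * (g s i * h j * A$$(i,j)))"
    by (intro sum.cong refl) (rule sum.swap)
  also have "\<dots> = (\<Sum>s\<in>F. \<Sum>i<dim_row A. \<Sum>j<dim_row A. c s * (g s i * h j * A$$(i,j)))"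
    by (rule sum.swap)
  also have "\<dots> = (\<Sum>s\<in>F. c s * Bf A (g s) h)"
    unfolding Bf_def by (simp add: sum_distrib_left)
  finally show ?thesis .
qed

lemma R_sum: "R (\<lambda>k. \<Sum>s\<in>F. c s * s k) = (\<lambda>k. \<Sum>s\<in>F. real_of_int (c s) * R s k)"
  unfolding R_def by simp

lemma iso: assumes u: "u \<in> I_T b m" and v: "v \<in> I_T b m" shows "Bf GM (R u) (R v) = 0"
proof -
  obtain F c where F: "finite F" "F \<subseteq> {m 1 1 x y |x y. x \<in> D 1 \<and> y \<in> D 1}" and u: "u = (\<lambda>k. \<Sum>s\<in>F. c s * s k)"
    using IT_elem[OF u] by blast
  obtain G d where G: "finite G" "G \<subseteq> {m 1 1 x y |x y. x \<in> D 1 \<and> y \<in> D 1}" and v: "v = (\<lambda>k. \<Sum>s\<in>G. d s * s k)"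
    using IT_elem[OF v] by blast
  have z: "Bf GM (R t) (R s) = 0" if tG: "t \<in> G" and sF: "s \<in> F" for s t
  proof -
    obtain x y where "t = m 1 1 x y" "x \<in> D 1" "y \<in> D 1" using G tG by blast
    moreover obtain z w where "s = m 1 1 z w" "z \<in> D 1" "w \<in> D 1" using F sF by blast
    ultimately show ?thesis using BQ quad_zero by simp
  qed
  have "Bf GM (R u) (R v) = (\<Sum>s\<in>F. real_of_int (c s) * Bf GM (R s) (R v))"
    unfolding u R_sum Bf_sum_l ..
  also have "\<dots> = (\<Sum>s\<in>F. real_of_int (c s) * Bf GM (R v) (R s))"
    using Bf_GM_sym by simp
  also have "\<dots> = 0" unfolding v R_sum Bf_sum_l using z by simp
  finally show ?thesis .
qed

lemma dual_coord: "\<exists>w. w \<in> D 2 \<and> (\<forall>y\<in>D 2. Gam w y = y i)"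
proof -
  have fm: "(4::nat) - 2 = 2" by simp
  have "\<exists>!x. x \<in> D 2 \<and> (\<forall>y\<in>D (4 - 2). p (m 2 (4 - 2) x y) = y i)"
    by (rule pairing) (simp_all add: coord_add)
  thus ?thesis unfolding fm by blast
qed

lemma two_indep_false:
  assumes u: "u \<in> I_T b m" and v: "v \<in> I_T b m" and uv: "u \<noteq> v" and ind: "int_lin_indep {u,v}"
  shows False
proof -
  obtain i j where ij: "u i * v j - u j * v i \<noteq> 0" using indep2_minor[OF uv ind] by blast
  obtain w1 where w1: "w1 \<in> D 2" "\<forall>y\<in>D 2. Gam w1 y = y i" using dual_coord by blast
  obtain w2 where w2: "w2 \<in> D 2" "\<forall>y\<in>D 2. Gam w2 y = y j" using dual_coord by blast
  have uD: "u \<in> D 2" and vD: "v \<in> D 2" using IT_D2 u v by auto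
  have L: "Bf GM (\<lambda>k. a * f k + c * g k) h = a * Bf GM f h + c * Bf GM g h" for a f c g h by (rule Bf_lc_l)
  have Rr: "Bf GM h (\<lambda>k. a * f k + c * g k) = a * Bf GM h f + c * Bf GM h g" for a f c g h by (rule Bf_lc_r)
  have S: "Bf GM f g = Bf GM g f" for f g by (rule Bf_GM_sym)
  have I: "Bf GM (R u) (R u) = 0" "Bf GM (R v) (R v) = 0" "Bf GM (R u) (R v) = 0" using iso u v by auto
  have W: "Bf GM (R w1) (R u) = real_of_int (u i)" "Bf GM (R w1) (R v) = real_of_int (v i)"
      "Bf GM (R w2) (R u) = real_of_int (u j)" "Bf GM (R w2) (R v) = real_of_int (v j)"
      using Bf_GM w1 w2 uD vD by auto
  have d: "real_of_int (u i) * real_of_int (v j) - real_of_int (u j) * real_of_int (v i) \<noteq> 0"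
      using ij by (metis of_int_diff of_int_eq_0_iff of_int_mult)
  have "\<exists>f g. Bf GM f f > 0 \<and> Bf GM f f * Bf GM g g > (Bf GM f g)^2"
    using hyperbolic[OF L Rr S I W d] .
  thus False using no_pd by blast
qed

lemma part1: "zrank (I_T b m) \<le> 1"
  by (rule zrank_le1) (use two_indep_false in blast)

end


definition sc :: "rat \<Rightarrow> (nat \<Rightarrow> rat) \<Rightarrow> (nat \<Rightarrow> rat)" where "sc c f = (\<lambda>i. c * f i)"

interpretation V: vector_space sc
  by unfold_locales (auto simp: sc_def algebra_simps fun_eq_iff)

lemma sc_apply: "sc c f i = c * f i" unfolding sc_def by simp

locale skew =
  fixes k :: nat and S :: "nat \<Rightarrow> nat \<Rightarrow> int"
  assumes skew: "\<And>a c. S a c = - S c a"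
begin

definition om :: "(nat \<Rightarrow> rat) \<Rightarrow> (nat \<Rightarrow> rat) \<Rightarrow> rat" where
  "om f g = (\<Sum>a<k. \<Sum>c<k. f a * g c * of_int (S a c))"

lemma om_add_l: "om (f + g) h = om f h + om g h"
  unfolding om_def by (simp add: algebra_simps sum.distrib)
lemma om_add_r: "om h (f + g) = om h f + om h g"
  unfolding om_def by (simp add: algebra_simps sum.distrib)
lemma om_diff_l: "om (f - g) h = om f h - om g h"
  unfolding om_def by (simp add: algebra_simps sum_subtractf)
lemma om_diff_r: "om h (f - g) = om h f - om h g"
  unfolding om_def by (simp add: algebra_simps sum_subtractf)
lemma om_sc_l: "om (sc c f) h = c * om f h"
  unfolding om_def by (simp add: sc_apply algebra_simps sum_distrib_left)
lemma om_sc_r: "om h (sc c f) = c * om h f"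
  unfolding om_def by (simp add: sc_apply algebra_simps sum_distrib_left)
lemma om_zero_l: "om 0 h = 0" unfolding om_def by simp
lemma om_skew: "om f g = - om g f"
proof -
  have "om f g = (\<Sum>c<k. \<Sum>a<k. f a * g c * of_int (S a c))" unfolding om_def by (rule sum.swap)
  also have "\<dots> = (\<Sum>c<k. \<Sum>a<k. - (g c * f a * of_int (S c a)))"
  proof (intro sum.cong refl)
    fix a c
    have "of_int (S a c) = - (of_int (S c a) :: rat)" using skew[of a c] by simp
    thus "f a * g c * of_int (S a c) = - (g c * f a * of_int (S c a))" by simp
  qed
  also have "\<dots> = - om g f" unfolding om_def by (simp add: sum_negf)
  finally show ?thesis .
qed
lemma om_alt: "om f f = 0" using om_skew[of f f] by simp

definition Rad :: "(nat \<Rightarrow> rat) set \<Rightarrow> (nat \<Rightarrow> rat) set" where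
  "Rad U = {x \<in> U. \<forall>y\<in>U. om x y = 0}"

lemma parity_aux:
  "finite B \<Longrightarrow> V.independent B \<Longrightarrow> card B = n \<Longrightarrow>
    V.dim (Rad (V.span B)) \<le> n \<and> even (n - V.dim (Rad (V.span B)))"
proof (induction n arbitrary: B rule: less_induct)
  case (less n B)
  note fin = less.prems(1) and ind = less.prems(2) and card = less.prems(3)
  define U where "U = V.span B"
  have le: "V.dim (Rad U) \<le> n" unfolding card[symmetric]
    by (rule V.dim_le_card[OF _ fin]) (auto simp: Rad_def U_def)
  have dimU: "V.dim U = n" unfolding U_def using V.dim_span_eq_card_independent[OF ind] card by simp
  show ?case
  proof (cases "\<forall>x\<in>U. \<forall>y\<in>U. om x y = 0")
    case True
    hence "Rad U = U" unfolding Rad_def by auto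
    hence "V.dim (Rad U) = n" using dimU by simp
    thus ?thesis unfolding U_def by simp
  next
    case False
    then obtain e f0 where e: "e \<in> U" and f0: "f0 \<in> U" and ef0: "om e f0 \<noteq> 0" by auto
    define f where "f = sc (1 / om e f0) f0"
    have f: "f \<in> U" unfolding f_def U_def using f0 U_def V.span_scale by auto
    have ef: "om e f = 1" unfolding f_def om_sc_r using ef0 by simp
    have fe: "om f e = -1" using om_skew[of f e] ef by simp
    have ee: "om e e = 0" and ff: "om f f = 0" using om_alt by auto
    define \<pi> where "\<pi> x = x - sc (om x f) e + sc (om x e) f" for x
    have \<pi>e: "om (\<pi> x) e = 0" for x unfolding \<pi>_def om_add_l om_diff_l om_sc_l ee fe by simp
    have \<pi>f: "om (\<pi> x) f = 0" for x unfolding \<pi>_def om_add_l om_diff_l om_sc_l ef ff by simp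
    have decomp: "x = \<pi> x + sc (om x f) e - sc (om x e) f" for x unfolding \<pi>_def by (simp add: algebra_simps)
    have subU: "V.subspace U" unfolding U_def by simp
    have \<pi>U: "\<pi> x \<in> U" if "x \<in> U" for x
      unfolding \<pi>_def using that e f subU V.subspace_add V.subspace_diff V.subspace_scale by metis
    define U' where "U' = {x \<in> U. om x e = 0 \<and> om x f = 0}"
    have subU': "V.subspace U'" unfolding V.subspace_def U'_def
      using subU V.subspace_0 V.subspace_add V.subspace_scale
      by (auto simp: om_add_l om_sc_l om_zero_l)
    have U'U: "U' \<subseteq> U" unfolding U'_def by auto
    obtain B' where B': "B' \<subseteq> U'" "V.independent B'" "U' \<subseteq> V.span B'" "card B' = V.dim U'"
      using V.basis_exists by blast
    have finB': "finite B'" using V.independent_span_bound[OF fin B'(2)] B'(1) U'U U_def by auto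
    have spanB': "V.span B' = U'" using V.span_minimal[OF B'(1) subU'] B'(3) by auto
    have eU': "e \<notin> U'" unfolding U'_def using ef by simp
    have fU': "f \<notin> U'" unfolding U'_def using fe by simp
    have eneqf: "e \<noteq> f" using ee ef by auto
    have ind1: "V.independent (insert f B')"
      using V.independent_insert B'(2) fU' B'(1) spanB' by auto
    have "e \<notin> V.span (insert f B')"
    proof
      assume "e \<in> V.span (insert f B')"
      then obtain c where "e - sc c f \<in> U'" using V.span_breakdown_eq spanB' by blast
      hence "om (e - sc c f) f = 0" unfolding U'_def by simp
      thus False unfolding om_diff_l om_sc_l ef ff by simp
    qed
    hence ind2: "V.independent (insert e (insert f B'))"
      using V.independent_insert ind1 eU' eneqf B'(1) by auto
    have B2U: "insert e (insert f B') \<subseteq> U" using e f B'(1) U'U by auto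
    have UB2: "U \<subseteq> V.span (insert e (insert f B'))"
    proof
      fix x assume x: "x \<in> U"
      have "\<pi> x \<in> U'" unfolding U'_def using \<pi>U[OF x] \<pi>e \<pi>f by simp
      hence "\<pi> x \<in> V.span (insert e (insert f B'))" using spanB' V.span_mono[of B' "insert e (insert f B')"] by auto
      moreover have "e \<in> V.span (insert e (insert f B'))" "f \<in> V.span (insert e (insert f B'))"
        by (auto intro: V.span_base)
      ultimately have "\<pi> x + sc (om x f) e - sc (om x e) f \<in> V.span (insert e (insert f B'))"
        by (intro V.span_add V.span_diff V.span_scale)
      thus "x \<in> V.span (insert e (insert f B'))" using decomp[of x] by simp
    qed
    have "card (insert e (insert f B')) = V.dim U" using V.basis_card_eq_dim[OF B2U UB2 ind2] .
    moreover have "card (insert e (insert f B')) = card B' + 2"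
      using finB' eU' fU' eneqf B'(1) by (auto simp: card_insert_if)
    ultimately have cB': "card B' = n - 2" and n2: "n \<ge> 2" using dimU by auto
    have lt: "n - 2 < n" using n2 by simp
    from less.IH[OF lt finB' B'(2) cB']
    have IH: "V.dim (Rad U') \<le> n - 2" "even (n - 2 - V.dim (Rad U'))" unfolding spanB' by auto
    have RadEq: "Rad U = Rad U'"
    proof
      show "Rad U \<subseteq> Rad U'" unfolding Rad_def U'_def using e f by auto
      show "Rad U' \<subseteq> Rad U"
      proof
        fix x assume x: "x \<in> Rad U'"
        hence xU': "x \<in> U'" and z: "\<forall>y\<in>U'. om x y = 0" unfolding Rad_def by auto
        have xe: "om x e = 0" and xf: "om x f = 0" using xU' unfolding U'_def by auto
        have "om x y = 0" if y: "y \<in> U" for y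
        proof -
          have "\<pi> y \<in> U'" unfolding U'_def using \<pi>U[OF y] \<pi>e \<pi>f by simp
          hence "om x (\<pi> y) = 0" using z by auto
          moreover have "om x y = om x (\<pi> y) + om y f * om x e - om y e * om x f"
            by (subst decomp[of y]) (simp add: om_add_r om_diff_r om_sc_r)
          ultimately show ?thesis using xe xf by simp
        qed
        thus "x \<in> Rad U" unfolding Rad_def using xU' U'U by auto
      qed
    qed
    have d: "V.dim (Rad U) = V.dim (Rad U')" using RadEq by simp
    have "n - V.dim (Rad U) = (n - 2 - V.dim (Rad U')) + 2" using IH(1) n2 d by linarith
    hence "even (n - V.dim (Rad U))" using IH(2) by simp
    thus ?thesis using le unfolding U_def by simp
  qed
qed


definition Zk :: "(nat \<Rightarrow> int) set" where "Zk = {v. \<forall>i\<ge>k. v i = 0}"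
definition K :: "(nat \<Rightarrow> int) set" where
  "K = {x \<in> Zk. \<forall>y\<in>Zk. (\<Sum>a<k. \<Sum>c<k. x a * y c * S a c) = 0}"
definition Q :: "(nat \<Rightarrow> int) \<Rightarrow> nat \<Rightarrow> rat" where "Q x = (\<lambda>i. of_int (x i))"
definition Ek :: "(nat \<Rightarrow> rat) set" where "Ek = {v. \<forall>i\<ge>k. v i = 0}"
definition dl :: "nat \<Rightarrow> nat \<Rightarrow> rat" where "dl a = (\<lambda>i. if i = a then 1 else 0)"

lemma sum_if_eq: "(\<Sum>c'<k. (if c' = c then F c' else 0)) = (if c < k then F c else (0::'a::comm_monoid_add))"
  by (induction k) auto

lemma sum_fun_apply: "(\<Sum>v\<in>t. F v) i = (\<Sum>v\<in>t. F v i)"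
  by (induction t rule: infinite_finite_induct) auto

lemma Ek_span: "Ek = V.span (dl ` {..<k})"
proof
  show "Ek \<subseteq> V.span (dl ` {..<k})"
  proof
    fix f assume f: "f \<in> Ek"
    have "f x = (\<Sum>a<k. sc (f a) (dl a)) x" for x
    proof -
      have "(\<Sum>a<k. sc (f a) (dl a)) x = (\<Sum>a<k. (if a = x then f a else 0))"
        unfolding sum_fun_apply by (intro sum.cong refl) (simp add: sc_apply dl_def)
      also have "\<dots> = (if x < k then f x else 0)" by (rule sum_if_eq)
      finally show ?thesis using f unfolding Ek_def by auto
    qed
    hence "f = (\<Sum>a<k. sc (f a) (dl a))" by (intro ext)
    moreover have "(\<Sum>a<k. sc (f a) (dl a)) \<in> V.span (dl ` {..<k})"
      by (intro V.span_sum V.span_scale V.span_base) auto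
    ultimately show "f \<in> V.span (dl ` {..<k})" by simp
  qed
  have "V.subspace Ek" unfolding V.subspace_def Ek_def by (auto simp: sc_apply)
  moreover have "dl ` {..<k} \<subseteq> Ek" unfolding Ek_def dl_def by auto
  ultimately show "V.span (dl ` {..<k}) \<subseteq> Ek" using V.span_minimal by blast
qed

lemma dl_inj: "inj dl"
  unfolding inj_def dl_def by (metis one_neq_zero)

lemma dl_indep: "V.independent (dl ` {..<k})"
proof -
  have "u v = 0" if t: "finite t" "t \<subseteq> dl ` {..<k}" and s: "(\<Sum>v\<in>t. sc (u v) v) = 0" and v: "v \<in> t" for t u v
  proof -
    obtain a where a: "v = dl a" using t v by auto
    have "(\<Sum>w\<in>t. sc (u w) w) a = 0" using s by simp
    hence "(\<Sum>w\<in>t. u w * w a) = 0" by (simp add: sum_fun_apply sc_apply)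
    moreover have "(\<Sum>w\<in>t. u w * w a) = u v"
    proof -
      have "(\<Sum>w\<in>t. u w * w a) = (\<Sum>w\<in>{v}. u w * w a)"
      proof (rule sum.mono_neutral_right)
        show "\<forall>w\<in>t - {v}. u w * w a = 0"
        proof
          fix w assume "w \<in> t - {v}"
          then obtain b where "w = dl b" "w \<noteq> v" using t by auto
          thus "u w * w a = 0" using a unfolding dl_def by auto
        qed
      qed (use t v in auto)
      thus ?thesis using a unfolding dl_def by simp
    qed
    ultimately show ?thesis by simp
  qed
  thus ?thesis unfolding V.dependent_explicit by blast
qed

lemma card_dl: "card (dl ` {..<k}) = k"
  using card_image[OF inj_on_subset[OF dl_inj]] by simp

lemma K_char: "x \<in> K \<longleftrightarrow> x \<in> Zk \<and> (\<forall>c<k. (\<Sum>a<k. x a * S a c) = 0)"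
proof
  assume x: "x \<in> K"
  have "(\<Sum>a<k. x a * S a c) = 0" if c: "c < k" for c
  proof -
    define y where "y = (\<lambda>i. if i = c then 1 else (0::int))"
    have "y \<in> Zk" unfolding y_def Zk_def using c by auto
    hence "(\<Sum>a<k. \<Sum>c'<k. x a * y c' * S a c') = 0" using x unfolding K_def by auto
    moreover have "(\<Sum>c'<k. x a * y c' * S a c') = x a * S a c" for a
    proof -
      have "(\<Sum>c'<k. x a * y c' * S a c') = (\<Sum>c'<k. (if c' = c then x a * S a c' else 0))"
        unfolding y_def by (intro sum.cong refl) auto
      thus ?thesis using sum_if_eq c by simp
    qed
    ultimately show ?thesis by simp
  qed
  thus "x \<in> Zk \<and> (\<forall>c<k. (\<Sum>a<k. x a * S a c) = 0)" using x unfolding K_def by auto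
next
  assume x: "x \<in> Zk \<and> (\<forall>c<k. (\<Sum>a<k. x a * S a c) = 0)"
  have "(\<Sum>a<k. \<Sum>c<k. x a * y c * S a c) = 0" for y
  proof -
    have "(\<Sum>a<k. \<Sum>c<k. x a * y c * S a c) = (\<Sum>c<k. y c * (\<Sum>a<k. x a * S a c))"
      by (subst sum.swap) (simp add: sum_distrib_left algebra_simps)
    thus ?thesis using x by simp
  qed
  thus "x \<in> K" unfolding K_def using x by auto
qed

lemma Rad_char: "v \<in> Rad Ek \<longleftrightarrow> v \<in> Ek \<and> (\<forall>c<k. (\<Sum>a<k. v a * of_int (S a c)) = 0)"
proof
  assume v: "v \<in> Rad Ek"
  have "(\<Sum>a<k. v a * of_int (S a c)) = 0" if c: "c < k" for c
  proof -
    have "dl c \<in> Ek" unfolding Ek_def dl_def using c by auto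
    hence "om v (dl c) = 0" using v unfolding Rad_def by auto
    moreover have "(\<Sum>c'<k. v a * dl c c' * of_int (S a c')) = v a * of_int (S a c)" for a
    proof -
      have "(\<Sum>c'<k. v a * dl c c' * of_int (S a c')) = (\<Sum>c'<k. (if c' = c then v a * of_int (S a c') else 0))"
        unfolding dl_def by (intro sum.cong refl) auto
      thus ?thesis using sum_if_eq c by simp
    qed
    ultimately show ?thesis unfolding om_def by simp
  qed
  thus "v \<in> Ek \<and> (\<forall>c<k. (\<Sum>a<k. v a * of_int (S a c)) = 0)" using v unfolding Rad_def by auto
next
  assume v: "v \<in> Ek \<and> (\<forall>c<k. (\<Sum>a<k. v a * of_int (S a c)) = 0)"
  have "om v y = 0" for y
  proof -
    have "om v y = (\<Sum>c<k. y c * (\<Sum>a<k. v a * of_int (S a c)))"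
      unfolding om_def by (subst sum.swap) (simp add: sum_distrib_left algebra_simps)
    thus ?thesis using v by simp
  qed
  thus "v \<in> Rad Ek" unfolding Rad_def using v by auto
qed

lemma Q_K: "Q x \<in> Rad Ek \<longleftrightarrow> x \<in> K"
proof -
  have "Q x \<in> Ek \<longleftrightarrow> x \<in> Zk" unfolding Q_def Ek_def Zk_def by auto
  moreover have "(\<Sum>a<k. Q x a * of_int (S a c)) = of_int (\<Sum>a<k. x a * S a c)" for c
    unfolding Q_def by simp
  ultimately show ?thesis unfolding Rad_char K_char by (metis of_int_eq_0_iff)
qed

lemma denom_clear: "finite (X :: rat set) \<Longrightarrow> \<exists>D::int. D > 0 \<and> (\<forall>r\<in>X. \<exists>z::int. of_int D * r = of_int z)"
proof (induction X rule: finite_induct)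
  case empty thus ?case by (intro exI[of _ 1]) auto
next
  case (insert r X)
  then obtain D where D: "D > 0" "\<forall>r\<in>X. \<exists>z::int. of_int D * r = of_int z" by auto
  obtain a b where qr: "quotient_of r = (a, b)" by (cases "quotient_of r") auto
  have b: "b > 0" using quotient_of_denom_pos[OF qr] .
  have rr: "r = of_int a / of_int b" using quotient_of_div[OF qr] .
  have "\<forall>r'\<in>insert r X. \<exists>z::int. of_int (D * b) * r' = of_int z"
  proof
    fix r' assume "r' \<in> insert r X"
    thus "\<exists>z::int. of_int (D * b) * r' = of_int z"
    proof
      assume "r' = r"
      thus ?thesis using b unfolding rr by (intro exI[of _ "D * a"]) simp
    next
      assume "r' \<in> X"
      then obtain z where "of_int D * r' = of_int z" using D by auto
      thus ?thesis by (intro exI[of _ "z * b"]) (simp add: algebra_simps)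
    qed
  qed
  thus ?case using D b by (intro exI[of _ "D * b"]) simp
qed

lemma card_le_dim:
  assumes T: "T \<subseteq> W" "V.independent T" and W: "W \<subseteq> V.span C" "finite C"
  shows "card T \<le> V.dim W"
proof -
  obtain BW where BW: "BW \<subseteq> W" "V.independent BW" "W \<subseteq> V.span BW" "card BW = V.dim W"
    using V.basis_exists by blast
  have "finite BW" using V.independent_span_bound[OF W(2) BW(2)] BW(1) W(1) by auto
  thus ?thesis using V.independent_span_bound[OF _ T(2)] T(1) BW by (metis subset_trans)
qed

lemma RadEk_span: "Rad Ek \<subseteq> V.span (dl ` {..<k})"
  unfolding Ek_span[symmetric] Rad_def by auto

lemma indep_bound:
  assumes Ss: "Ss \<subseteq> K" "int_lin_indep Ss"
  shows "card Ss \<le> V.dim (Rad Ek)"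
proof -
  have fin: "finite Ss" using Ss unfolding int_lin_indep_def by auto
  have injQ: "inj Q" unfolding inj_def Q_def by (auto simp: fun_eq_iff)
  have QS: "Q ` Ss \<subseteq> Rad Ek" using Ss Q_K by auto
  have ind: "V.independent (Q ` Ss)"
  proof
    assume "V.dependent (Q ` Ss)"
    then obtain t u v0 where t: "finite t" "t \<subseteq> Q ` Ss" and s: "(\<Sum>v\<in>t. sc (u v) v) = 0"
      and v0: "v0 \<in> t" "u v0 \<noteq> 0" unfolding V.dependent_explicit by blast
    obtain D where D: "D > 0" "\<forall>r\<in>u ` t. \<exists>z::int. of_int D * r = of_int z"
      using denom_clear[of "u ` t"] t by auto
    define cz where "cz v = (SOME z::int. of_int D * u v = of_int z)" for v
    have cz: "of_int (cz v) = of_int D * u v" if "v \<in> t" for v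
      unfolding cz_def using D(2) that by (metis (mono_tags, lifting) image_eqI someI_ex)
    define c where "c s = (if Q s \<in> t then cz (Q s) else 0)" for s
    define S' where "S' = {s \<in> Ss. Q s \<in> t}"
    have S'S: "S' \<subseteq> Ss" unfolding S'_def by auto
    have QS': "Q ` S' = t" unfolding S'_def using t by auto
    have injS': "inj_on Q S'" using injQ inj_on_subset by blast
    have "(\<Sum>s\<in>Ss. c s * s i) = 0" for i
    proof -
      have e1: "(\<Sum>s\<in>Ss. c s * s i) = (\<Sum>s\<in>S'. c s * s i)"
        by (rule sum.mono_neutral_right[OF fin S'S]) (auto simp: S'_def c_def)
      have "of_int (\<Sum>s\<in>S'. c s * s i) = (\<Sum>s\<in>S'. of_int D * u (Q s) * Q s i)"
        unfolding of_int_sum by (intro sum.cong refl) (auto simp: c_def S'_def cz Q_def)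
      also have "\<dots> = (\<Sum>v\<in>t. of_int D * u v * v i)"
        unfolding QS'[symmetric] by (rule sum.reindex[OF injS', symmetric, unfolded comp_def])
      also have "\<dots> = of_int D * (\<Sum>v\<in>t. sc (u v) v) i"
        by (simp add: sum_fun_apply sc_apply sum_distrib_left mult.assoc)
      also have "\<dots> = 0" using s by simp
      finally have "(of_int (\<Sum>s\<in>S'. c s * s i) :: rat) = 0" .
      thus ?thesis unfolding e1 using of_int_eq_0_iff by blast
    qed
    moreover obtain s0 where s0: "s0 \<in> Ss" "Q s0 = v0" using v0 t by auto
    ultimately have "c s0 = 0" using Ss(2) unfolding int_lin_indep_def by blast
    hence "of_int D * u v0 = 0" using cz[OF v0(1)] s0 v0 unfolding c_def by simp
    thus False using D v0 by simp
  qed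
  have "card (Q ` Ss) \<le> V.dim (Rad Ek)" by (rule card_le_dim[OF QS ind RadEk_span]) simp
  thus ?thesis using card_image[OF inj_on_subset[OF injQ]] by (metis subset_UNIV)
qed

lemma indep_exists: "\<exists>T. T \<subseteq> K \<and> int_lin_indep T \<and> card T = V.dim (Rad Ek)"
proof -
  obtain BR where BR: "BR \<subseteq> Rad Ek" "V.independent BR" "Rad Ek \<subseteq> V.span BR" "card BR = V.dim (Rad Ek)"
    using V.basis_exists by blast
  have finBR: "finite BR" using V.independent_span_bound[OF _ BR(2)] BR(1) RadEk_span by auto
  have "\<exists>D::int. D > 0 \<and> (\<forall>i. \<exists>z::int. of_int D * v i = of_int z)" if v: "v \<in> BR" for v
  proof -
    obtain D where D: "D > 0" "\<forall>r\<in>v ` {..<k}. \<exists>z::int. of_int D * r = of_int z"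
      using denom_clear[of "v ` {..<k}"] by auto
    have "v \<in> Ek" using v BR(1) unfolding Rad_def by auto
    hence "\<exists>z::int. of_int D * v i = of_int z" for i
      using D(2) unfolding Ek_def by (cases "i < k") (auto intro: exI[of _ 0])
    thus ?thesis using D by auto
  qed
  then obtain Dv where Dv: "\<And>v. v \<in> BR \<Longrightarrow> Dv v > 0 \<and> (\<forall>i. \<exists>z::int. of_int (Dv v) * v i = of_int z)"
    by metis
  define z where "z v = (\<lambda>i. SOME w::int. of_int (Dv v) * v i = of_int w)" for v
  have Qz: "Q (z v) = sc (of_int (Dv v)) v" if "v \<in> BR" for v
    unfolding Q_def z_def sc_def using Dv[OF that] by (auto intro!: ext) (metis (mono_tags, lifting) someI_ex)
  have zK: "z v \<in> K" if v: "v \<in> BR" for v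
  proof -
    have "v \<in> Rad Ek" using v BR(1) by auto
    hence h: "v \<in> Ek" "\<forall>c<k. (\<Sum>a<k. v a * of_int (S a c)) = 0" unfolding Rad_char by auto
    have "sc (of_int (Dv v)) v \<in> Ek" using h(1) unfolding Ek_def by (simp add: sc_apply)
    moreover have "\<forall>c<k. (\<Sum>a<k. sc (of_int (Dv v)) v a * of_int (S a c)) = 0"
      using h(2) by (simp add: sc_apply mult.assoc sum_distrib_left[symmetric])
    ultimately have "sc (of_int (Dv v)) v \<in> Rad Ek" unfolding Rad_char by blast
    thus ?thesis using Qz[OF v] Q_K by metis
  qed
  have injz: "inj_on z BR"
  proof
    fix v w assume v: "v \<in> BR" and w: "w \<in> BR" and e: "z v = z w"
    show "v = w"
    proof (rule ccontr)
      assume vw: "v \<noteq> w"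
      have eq: "sc (of_int (Dv v)) v = sc (of_int (Dv w)) w" using Qz v w e by metis
      define cf where "cf = (\<lambda>x. if x = v then of_int (Dv v) else - (of_int (Dv w) :: rat))"
      have "(\<Sum>x\<in>{v,w}. sc (cf x) x) = sc (cf v) v + sc (cf w) w" using vw by simp
      also have "\<dots> = sc (of_int (Dv v)) v + sc (- of_int (Dv w)) w" using vw by (simp add: cf_def)
      also have "\<dots> = 0" using eq by (simp add: fun_eq_iff sc_apply)
      finally have "(\<Sum>x\<in>{v,w}. sc ((\<lambda>x. if x = v then of_int (Dv v) else - of_int (Dv w)) x) x) = 0"
        unfolding cf_def .
      hence "of_int (Dv v) = (0::rat)"
        using V.independentD[OF BR(2), of "{v,w}" "\<lambda>x. if x = v then of_int (Dv v) else - of_int (Dv w)" v] v w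
        by simp
      thus False using Dv[OF v] by simp
    qed
  qed
  define T where "T = z ` BR"
  have TK: "T \<subseteq> K" unfolding T_def using zK by auto
  have indT: "int_lin_indep T" unfolding int_lin_indep_def
  proof (intro conjI allI impI ballI)
    show "finite T" unfolding T_def using finBR by simp
    fix c s assume z0: "\<forall>i. (\<Sum>s\<in>T. c s * s i) = 0" and s: "s \<in> T"
    have "(\<Sum>v\<in>BR. sc (of_int (c (z v)) * of_int (Dv v)) v) = 0"
    proof
      fix i
      have "(\<Sum>v\<in>BR. sc (of_int (c (z v)) * of_int (Dv v)) v) i = (\<Sum>v\<in>BR. of_int (c (z v)) * Q (z v) i)"
        by (simp add: sum_fun_apply sc_apply Qz mult.assoc)
      also have "\<dots> = of_int (\<Sum>v\<in>BR. c (z v) * z v i)" by (simp add: Q_def)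
      also have "(\<Sum>v\<in>BR. c (z v) * z v i) = (\<Sum>s\<in>T. c s * s i)"
        unfolding T_def by (rule sum.reindex[OF injz, symmetric, unfolded comp_def])
      finally show "(\<Sum>v\<in>BR. sc (of_int (c (z v)) * of_int (Dv v)) v) i = 0 i" using z0 by simp
    qed
    then obtain v where v: "v \<in> BR" "s = z v" using s unfolding T_def by auto
    have "of_int (c (z v)) * of_int (Dv v) = (0::rat)"
      using V.independentD[OF BR(2) finBR subset_refl, of "\<lambda>v. of_int (c (z v)) * of_int (Dv v)" v] \<open>(\<Sum>v\<in>BR. _) = 0\<close> v by simp
    thus "c s = 0" using Dv[OF v(1)] v(2) by simp
  qed
  have "card T = V.dim (Rad Ek)" unfolding T_def using card_image[OF injz] BR(4) by simp
  thus ?thesis using TK indT by blast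
qed

lemma zrank_K: "zrank K = V.dim (Rad Ek)"
  unfolding zrank_def
  by (rule Greatest_equality) (use indep_exists indep_bound in blast)+

theorem parity: "zrank K \<le> k \<and> even (k - zrank K)"
proof -
  have h: "V.dim (Rad (V.span (dl ` {..<k}))) \<le> k \<and> even (k - V.dim (Rad (V.span (dl ` {..<k}))))"
    by (rule parity_aux[OF _ dl_indep card_dl]) simp
  show ?thesis unfolding zrank_K Ek_span by (rule h)
qed

end


context BP begin

lemma prod_IT: assumes "x \<in> D 1" "y \<in> D 1" shows "m 1 1 x y \<in> I_T b m"
proof -
  have "m 1 1 x y = (\<lambda>k. \<Sum>s\<in>{m 1 1 x y}. 1 * s k)" by simp
  thus ?thesis unfolding I_T_def int_span_def mem_Collect_eq
    by (intro exI[of _ "{m 1 1 x y}"] exI[of _ "\<lambda>_. 1"]) (use assms in auto)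
qed

lemma exists_i0: "\<exists>i0. \<forall>x\<in>D 1. \<forall>y\<in>D 1. (m 1 1 x y = vzero \<longleftrightarrow> m 1 1 x y i0 = 0)"
proof (cases "\<forall>x\<in>D 1. \<forall>y\<in>D 1. m 1 1 x y = vzero")
  case True
  have "\<forall>x\<in>D 1. \<forall>y\<in>D 1. (m 1 1 x y = vzero \<longleftrightarrow> m 1 1 x y 0 = 0)"
  proof (intro ballI iffI)
    fix x y assume x: "x \<in> D 1" and y: "y \<in> D 1"
    show "m 1 1 x y 0 = 0" if "m 1 1 x y = vzero" using that by (simp add: vzero_def)
    show "m 1 1 x y = vzero" if "m 1 1 x y 0 = 0" using True x y by blast
  qed
  thus ?thesis by blast
next
  case False
  then obtain x0 y0 where x0: "x0 \<in> D 1" and y0: "y0 \<in> D 1" and e0: "m 1 1 x0 y0 \<noteq> vzero" by auto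
  define e where "e = m 1 1 x0 y0"
  have "\<exists>i0. e i0 \<noteq> 0"
  proof (rule ccontr)
    assume "\<not> (\<exists>i0. e i0 \<noteq> 0)"
    hence "e = vzero" unfolding vzero_def by (auto intro!: ext)
    with e0 show False unfolding e_def by simp
  qed
  then obtain i0 where i0: "e i0 \<noteq> 0" by blast
  have bk: "m 1 1 x y = vzero" if x: "x \<in> D 1" and y: "y \<in> D 1" and z: "m 1 1 x y i0 = 0" for x y
  proof -
    define u where "u = m 1 1 x y"
    have ue: "u \<noteq> e" using z i0 unfolding u_def by auto
    have "\<not> int_lin_indep {u, e}"
      using two_indep_false[OF prod_IT[OF x y] prod_IT[OF x0 y0]] ue unfolding u_def e_def by blast
    then obtain c where c: "\<forall>k. (\<Sum>s\<in>{u,e}. c s * s k) = 0" and nz: "\<exists>s\<in>{u,e}. c s \<noteq> 0"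
      unfolding int_lin_indep_def by auto
    have ck: "c u * u k + c e * e k = 0" for k using c ue by auto
    have "c e = 0" using ck[of i0] z i0 unfolding u_def by simp
    hence "c u \<noteq> 0" using nz by auto
    hence "u k = 0" for k using ck[of k] \<open>c e = 0\<close> by simp
    thus ?thesis unfolding u_def[symmetric] vzero_def by (intro ext) simp
  qed
  have "\<forall>x\<in>D 1. \<forall>y\<in>D 1. (m 1 1 x y = vzero \<longleftrightarrow> m 1 1 x y i0 = 0)"
  proof (intro ballI iffI)
    fix x y assume x: "x \<in> D 1" and y: "y \<in> D 1"
    show "m 1 1 x y i0 = 0" if "m 1 1 x y = vzero" using that by (simp add: vzero_def)
    show "m 1 1 x y = vzero" if "m 1 1 x y i0 = 0" using bk x y that by blast
  qed
  thus ?thesis by blast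
qed

lemma part2: "even (b1_tilde b m)"
proof -
  obtain i0 where i0: "\<forall>x\<in>D 1. \<forall>y\<in>D 1. (m 1 1 x y = vzero \<longleftrightarrow> m 1 1 x y i0 = 0)"
    using exists_i0 by blast
  define k where "k = b 1"
  define S where "S a c = (if a < k \<and> c < k then m 1 1 (std_basis a) (std_basis c) i0 else 0)" for a c
  have std1: "std_basis a \<in> D 1" if "a < k" for a using deg_part_std that unfolding k_def by auto
  have sk: "S a c = - S c a" for a c
  proof (cases "a < k \<and> c < k")
    case True
    have "m 1 1 (std_basis c) (std_basis a) = vsmult (-1) (m 1 1 (std_basis a) (std_basis c))"
      using neg11 std1 True by blast
    thus ?thesis unfolding S_def using True by (simp add: vsmult_def)
  next
    case False thus ?thesis unfolding S_def by auto
  qed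
  interpret sk: skew k S by unfold_locales (rule sk)
  define phi where "phi x y = m 1 1 x y i0" for x y
  have phi_expand: "phi x y = (\<Sum>a<k. \<Sum>c<k. x a * y c * S a c)" if x: "x \<in> D 1" and y: "y \<in> D 1" for x y
  proof -
    have addr: "additive_on (D 1) (\<lambda>y. phi x' y)" if "x' \<in> D 1" for x'
      unfolding phi_def using additive_right[of 1 1 x' "\<lambda>v. v i0"] coord_add that by simp
    have addl: "additive_on (D 1) (\<lambda>x. phi x y')" if "y' \<in> D 1" for y'
      unfolding phi_def using additive_left[of 1 1 y' "\<lambda>v. v i0"] coord_add that by simp
    have "phi x y = (\<Sum>c<k. y c * phi x (std_basis c))"
      using additive_on_expand[OF addr[OF x] y] unfolding k_def .
    also have "\<dots> = (\<Sum>c<k. y c * (\<Sum>a<k. x a * phi (std_basis a) (std_basis c)))"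
      using additive_on_expand[OF addl[OF std1] x] unfolding k_def by simp
    also have "\<dots> = (\<Sum>a<k. \<Sum>c<k. x a * y c * S a c)"
      by (subst sum.swap) (simp add: S_def phi_def sum_distrib_left algebra_simps)
    finally show ?thesis .
  qed
  have Zk: "sk.Zk = D 1" unfolding sk.Zk_def deg_part_def by (simp add: k_def)
  have keq: "ker_T b m = sk.K"
  proof
    show "ker_T b m \<subseteq> sk.K"
    proof
      fix x assume "x \<in> ker_T b m"
      hence x: "x \<in> D 1" and z: "\<forall>y\<in>D 1. m 1 1 x y = vzero" unfolding ker_T_def by auto
      have "(\<Sum>a<k. \<Sum>c<k. x a * y c * S a c) = 0" if y: "y \<in> D 1" for y
        using phi_expand[OF x y] z y unfolding phi_def vzero_def by simp
      thus "x \<in> sk.K" unfolding sk.K_def Zk using x by auto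
    qed
    show "sk.K \<subseteq> ker_T b m"
    proof
      fix x assume "x \<in> sk.K"
      hence x: "x \<in> D 1" and z: "\<forall>y\<in>D 1. (\<Sum>a<k. \<Sum>c<k. x a * y c * S a c) = 0"
        unfolding sk.K_def Zk by auto
      have "m 1 1 x y = vzero" if y: "y \<in> D 1" for y
        using i0 x y z phi_expand[OF x y] unfolding phi_def by auto
      thus "x \<in> ker_T b m" unfolding ker_T_def using x by auto
    qed
  qed
  have e: "b1_tilde b m = k - zrank sk.K" unfolding b1_tilde_def keq k_def ..
  show ?thesis unfolding e by (rule sk.parity[THEN conjunct2])
qed

end

theorem mainTheorem3:
  assumes "bplus_one_type b m p"
  shows "zrank (I_T b m) \<le> 1 \<and> even (b1_tilde b m)"
proof -
  interpret BP b m p using assms unfolding bplus_one_type_def by unfold_locales auto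
  show ?thesis using part1 part2 by simp
qed


end
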